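(* Let $q$ be a prime power, let $n$ and $k$ be integers with $1\le k<n/2$, let $V=\mathbb{F}_q^n$, let $U$ be a $k$-dimensional subspace of $V$ and $W$ an $(n-k)$-dimensional subspace with $V=U\oplus W$. Let $t\in M_n(\mathbb{F}_q)$ be an element of type $T_k$ stabilizing $U$ (with respect to $W$). If $T$ is a maximal subring of $M_n(\mathbb{F}_q)$ containing $t$, then either (a) $T=T_U$ or $T=T_W$, where $T_X=\{A\in M_n(\mathbb{F}_q): AX\subseteq X\}$; or (b) $T$ is a maximal subring of Type II-$\ell$, where $\ell$ is a common prime divisor of $k$ and $n$.
   Context: A subring is an additive subgroup closed under multiplication (not necessarily containing the identity); a maximal subring is a proper subring not contained in any other proper subring. A Singer cycle in $\mathrm{GL}(m,q)$ is an element generating a cyclic subgroup of order $q^m-1$. An element $t\in M_n(\mathbb{F}_q)$ is of type $T_k$ stabilizing $U$ (with respect to the complement $W$) if $tU\subseteq U$, $tW\subseteq W$, and, in a basis $e_1,\dots,e_n$ with $e_1,\dots,e_k$ a basis of $U$ and $e_{k+1},\dots,e_n$ a basis of $W$, $t=\begin{pmatrix} S_U & 0\\ 0 & S_W\end{pmatrix}$ with $S_U\in M_k(\mathbb{F}_q)$ and $S_W\in M_{n-k}(\mathbb{F}_q)$ Singer cycles. A maximal subring of $M_n(\mathbb{F}_q)$ is of Type II-$\ell$ if it equals the centralizer $\{A\in M_n(\mathbb{F}_q): Au=uA \text{ for all } u\in K\}$ of a subring $K\subseteq M_n(\mathbb{F}_q)$ with $K\cong\mathbb{F}_{q^\ell}$,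 where $\ell$ is a prime dividing $n$. *)

theory Defs
  imports "HOL-Analysis.Analysis" "HOL-Computational_Algebra.Primes"
begin

text \<open>Matrices in M_n(F_q) are represented as 'a^'n^'n, with 'a a finite field
  (so q = CARD('a) is a prime power) and n = CARD('n). Matrix product is (**),
  a matrix acts on column vectors by (*v).\<close>

definition is_subring :: "('a::field^'n^'n) set \<Rightarrow> bool" where
  "is_subring S \<longleftrightarrow> 0 \<in> S \<and> (\<forall>A\<in>S. \<forall>B\<in>S. A - B \<in> S \<and> A ** B \<in> S)"

definition maximal_subring :: "('a::field^'n^'n) set \<Rightarrow> bool" where
  "maximal_subring S \<longleftrightarrow> is_subring S \<and> S \<noteq> UNIV \<and>
     (\<forall>R. is_subring R \<and> S \<subseteq> R \<and> R \<noteq> UNIV \<longrightarrow> R = S)"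

definition stab_ring :: "('a::field^'n) set \<Rightarrow> ('a^'n^'n) set" where
  "stab_ring X = {A. \<forall>x\<in>X. A *v x \<in> X}"

definition centralizer :: "('a::field^'n^'n) set \<Rightarrow> ('a^'n^'n) set" where
  "centralizer K = {A. \<forall>u\<in>K. A ** u = u ** A}"

text \<open>K (a subring, not necessarily containing the identity matrix) is,
  under the matrix operations, a field with q^l elements, i.e. K is isomorphic to F_{q^l}.\<close>
definition field_subring_of_card :: "('a::{field,finite}^'n^'n) set \<Rightarrow> nat \<Rightarrow> bool" where
  "field_subring_of_card K l \<longleftrightarrow> is_subring K \<and> card K = CARD('a) ^ l \<and>
     (\<exists>e\<in>K. e \<noteq> 0 \<and> (\<forall>x\<in>K. e ** x = x \<and> x ** e = x) \<and>
        (\<forall>x\<in>K. \<forall>y\<in>K. x ** y = y ** x) \<and>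
        (\<forall>x\<in>K. x \<noteq> 0 \<longrightarrow> (\<exists>y\<in>K. x ** y = e)))"

definition typeII :: "('a::{field,finite}^'n^'n) set \<Rightarrow> nat \<Rightarrow> bool" where
  "typeII T l \<longleftrightarrow> maximal_subring T \<and> prime l \<and> l dvd CARD('n) \<and>
     (\<exists>K. field_subring_of_card K l \<and> T = centralizer K)"

definition singer_on :: "('a::{field,finite}^'n^'n) \<Rightarrow> ('a^'n) set \<Rightarrow> bool" where
  "singer_on t X \<longleftrightarrow> (\<forall>x\<in>X. t *v x \<in> X) \<and>
     (let N = CARD('a) ^ vec.dim X - 1 in
       0 < N \<and> (\<forall>x\<in>X. ((\<lambda>v. t *v v) ^^ N) x = x) \<and>
       (\<forall>m. 0 < m \<and> m < N \<longrightarrow> \<not> (\<forall>x\<in>X. ((\<lambda>v. t *v v) ^^ m) x = x)))"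

definition type_T :: "('a::{field,finite}^'n^'n) \<Rightarrow> ('a^'n) set \<Rightarrow> ('a^'n) set \<Rightarrow> bool" where
  "type_T t U W \<longleftrightarrow> (\<forall>u\<in>U. t *v u \<in> U) \<and> (\<forall>w\<in>W. t *v w \<in> W) \<and>
     singer_on t U \<and> singer_on t W"

end

theory Submission
  imports Defs "HOL-Computational_Algebra.Polynomial"
begin

lemma mat_add_gen: "mat (a + b) = (mat a + mat b :: 'a::semiring_1^'n^'n)"
  by (simp add: mat_def vec_eq_iff)

lemma mat_uminus_gen: "mat (- a) = (- mat a :: 'a::ring_1^'n^'n)"
  by (simp add: mat_def vec_eq_iff)

lemma mat_vec: "mat c *v x = c *s (x :: 'a::comm_semiring_1^'n)"
  apply (vector matrix_vector_mult_def mat_def)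
  apply (simp add: if_distrib if_distribR cong del: if_weak_cong)
  done

lemma mvec_scale: "A *v (c *s x) = c *s (A *v (x :: 'a::comm_semiring_1^'n))"
  by (simp add: matrix_vector_mult_def vec_eq_iff sum_distrib_left mult.left_commute)

lemma mat_mult_gen: "mat (a * b) = (mat a ** mat b :: 'a::comm_semiring_1^'n^'n)"
  by (simp add: matrix_eq mat_vec matrix_vector_mul_assoc[symmetric])

lemma mat_commute: "mat c ** A = A ** (mat c :: 'a::comm_semiring_1^'n^'n)"
  by (simp add: matrix_eq mat_vec matrix_vector_mul_assoc[symmetric] mvec_scale)

lemma matrix_add_rdistrib_gen: "((A + B) ** C) = (A ** C) + (B ** (C :: 'a::semiring_1^'n^'n))"
  by (simp add: matrix_matrix_mult_def vec_eq_iff sum.distrib distrib_right)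

lemma matrix_uminus_left: "(- A) ** C = - (A ** (C :: 'a::ring_1^'n^'n))"
  by (simp add: matrix_matrix_mult_def vec_eq_iff sum_negf)

lemma matrix_uminus_right: "A ** (- C) = - (A ** (C :: 'a::ring_1^'n^'n))"
  by (simp add: matrix_matrix_mult_def vec_eq_iff sum_negf)

lemma matrix_diff_rdistrib: "((A - B) ** C) = (A ** C) - (B ** (C :: 'a::ring_1^'n^'n))"
  by (simp add: matrix_matrix_mult_def vec_eq_iff sum_subtractf left_diff_distrib)

lemma matrix_diff_ldistrib: "(C ** (A - B)) = (C ** A) - (C ** (B :: 'a::ring_1^'n^'n))"
  by (simp add: matrix_matrix_mult_def vec_eq_iff sum_subtractf right_diff_distrib)

lemma matrix_vector_uminus: "(- A) *v x = - (A *v (x :: 'a::ring_1^'n))"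
  by (simp add: matrix_vector_mult_def vec_eq_iff sum_negf)

lemma matrix_sum_vec: "(\<Sum>i\<in>S. f i) *v (x :: 'a::semiring_1^'n) = (\<Sum>i\<in>S. f i *v x)"
  by (induction S rule: infinite_finite_induct) (auto simp: matrix_vector_mult_add_rdistrib)

lemma matrix_sum_rmult: "(\<Sum>i\<in>S. f i) ** (A :: 'a::semiring_1^'n^'n) = (\<Sum>i\<in>S. f i ** A)"
  by (induction S rule: infinite_finite_induct) (auto simp: matrix_add_rdistrib_gen)

primrec mpow :: "'a::semiring_1^'n^'n \<Rightarrow> nat \<Rightarrow> 'a^'n^'n" where
  "mpow A 0 = mat 1"
| "mpow A (Suc m) = A ** mpow A m"

lemma mpow_add: "mpow A (i + j) = mpow A i ** mpow A j"
  by (induction i) (auto simp: matrix_mul_assoc)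

lemma mpow_Suc': "mpow A (Suc m) = mpow A m ** A"
  using mpow_add[of A m 1] by simp

lemma mpow_comm: "mpow A i ** mpow A j = mpow A j ** mpow A i"
  by (metis add.commute mpow_add)

lemma mpow_mult: "mpow A (i * j) = mpow (mpow A i) j"
  by (induction j) (auto simp: mpow_add mpow_comm)

lemma mpow_commute_gen: "A ** B = B ** A \<Longrightarrow> mpow A i ** B = B ** mpow A i"
proof (induction i)
  case (Suc i)
  have "mpow A (Suc i) ** B = A ** (mpow A i ** B)" by (simp add: matrix_mul_assoc)
  also have "\<dots> = (A ** B) ** mpow A i" using Suc by (simp add: matrix_mul_assoc)
  also have "\<dots> = B ** mpow A (Suc i)" using Suc.prems by (simp add: matrix_mul_assoc)
  finally show ?case .
qed simp

lemma mpow_prod: "A ** B = B ** A \<Longrightarrow> mpow (A ** B) i = mpow A i ** mpow B i"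
proof (induction i)
  case (Suc i)
  have "mpow (A ** B) (Suc i) = A ** B ** (mpow A i ** mpow B i)" using Suc by simp
  also have "\<dots> = A ** (B ** mpow A i) ** mpow B i" by (simp add: matrix_mul_assoc)
  also have "B ** mpow A i = mpow A i ** B" using mpow_commute_gen[OF Suc.prems] by simp
  finally show ?case by (simp add: matrix_mul_assoc)
qed simp

lemma mpow_iter: "((\<lambda>v. t *v v) ^^ m) x = mpow t m *v x"
  by (induction m) (auto simp: matrix_vector_mul_assoc)

lemma mpow_mat: "mpow (mat c :: 'a::comm_semiring_1^'n^'n) i = mat (c ^ i)"
  by (induction i) (simp_all add: mat_mult_gen[symmetric])

section \<open>Polynomial evaluation at matrices\<close>

definition peval :: "'a::comm_ring_1 poly \<Rightarrow> 'a^'n^'n \<Rightarrow> 'a^'n^'n" where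
  "peval p A = fold_coeffs (\<lambda>a M. mat a + A ** M) p 0"

lemma peval_0 [simp]: "peval 0 A = 0"
  by (simp add: peval_def)

lemma peval_pCons: "peval (pCons a p) A = mat a + A ** peval p A"
  by (cases "p = 0 \<and> a = 0") (auto simp add: peval_def)

lemma peval_const [simp]: "peval [:c:] A = mat c"
  by (simp add: peval_pCons)

lemma peval_add: "peval (p + q) A = peval p A + peval q A"
proof (induction p q rule: poly_induct2)
  case (pCons a p b q)
  have "peval (pCons a p + pCons b q) A = mat (a + b) + A ** peval (p + q) A"
    by (simp add: peval_pCons)
  also have "\<dots> = (mat a + A ** peval p A) + (mat b + A ** peval q A)"
    by (simp add: pCons mat_add_gen matrix_add_ldistrib ac_simps)
  finally show ?case by (simp add: peval_pCons)
qed simp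

lemma peval_smult: "peval (smult c p) A = mat c ** peval p A"
proof (induction p)
  case (pCons a p)
  have "A ** (mat c ** peval p A) = (A ** mat c) ** peval p A"
    by (simp only: matrix_mul_assoc)
  also have "\<dots> = (mat c ** A) ** peval p A" by (simp only: mat_commute)
  also have "\<dots> = mat c ** (A ** peval p A)" by (simp only: matrix_mul_assoc)
  finally have "A ** (mat c ** peval p A) = mat c ** (A ** peval p A)" .
  then show ?case
    by (simp add: peval_pCons pCons mat_mult_gen matrix_add_ldistrib)
qed simp

lemma peval_mult: "peval (p * q) A = peval p A ** peval q A"
proof (induction p)
  case (pCons a p)
  have "peval (pCons a p * q) A = peval (smult a q) A + peval (pCons 0 (p * q)) A"
    by (simp add: peval_add)
  also have "\<dots> = mat a ** peval q A + A ** (peval p A ** peval q A)"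
    using pCons by (simp add: peval_smult peval_pCons)
  also have "\<dots> = peval (pCons a p) A ** peval q A"
    by (simp add: peval_pCons matrix_add_rdistrib_gen matrix_mul_assoc)
  finally show ?case .
qed simp

lemma peval_uminus: "peval (- p) A = - peval p A"
proof -
  have "peval (- p) A = peval (smult (-1) p) A" by simp
  also have "\<dots> = mat (- 1) ** peval p A" by (rule peval_smult)
  also have "\<dots> = - peval p A" unfolding mat_uminus_gen matrix_uminus_left by simp
  finally show ?thesis .
qed

lemma peval_diff: "peval (p - q) A = peval p A - peval q A"
  using peval_add[of p "- q" A] by (simp add: peval_uminus)

lemma peval_one [simp]: "peval 1 A = mat 1"
  by (simp add: one_pCons)

lemma peval_X: "peval [:0, 1:] A = A"
  by (simp add: peval_pCons)

lemma peval_monom1: "peval (monom 1 i) A = mpow A i"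
proof (induction i)
  case 0 then show ?case by (simp add: monom_0)
next
  case (Suc i) then show ?case by (simp add: monom_Suc peval_pCons)
qed

lemma peval_comm: "peval p A ** peval q A = peval q A ** peval p A"
  by (simp only: peval_mult[symmetric] mult.commute)

lemma peval_pcompose: "peval (pcompose p r) A = peval p (peval r A)"
proof (induction p)
  case (pCons a p)
  have "peval (pcompose (pCons a p) r) A = mat a + peval r A ** peval (pcompose p r) A"
    by (simp add: pcompose_pCons peval_add peval_mult)
  then show ?case by (simp add: pCons peval_pCons)
qed simp

lemma peval_mpow: "mpow (peval p A) i = peval (p ^ i) A"
  by (induction i) (simp_all add: peval_mult)

lemma peval_agree:
  assumes "vec.subspace X" "\<forall>x\<in>X. B *v x \<in> X" "\<forall>x\<in>X. C *v x \<in> X" "\<forall>x\<in>X. B *v x = C *v x"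
  shows "\<forall>x\<in>X. peval p B *v x = peval p C *v x \<and> peval p B *v x \<in> X"
proof (induction p)
  case (pCons a p)
  show ?case
  proof
    fix x assume x: "x \<in> X"
    have "peval p B *v x = peval p C *v x" "peval p B *v x \<in> X" using pCons x by auto
    then show "peval (pCons a p) B *v x = peval (pCons a p) C *v x \<and> peval (pCons a p) B *v x \<in> X"
      using assms x
      by (simp add: peval_pCons matrix_vector_mult_add_rdistrib mat_vec
          matrix_vector_mul_assoc[symmetric] vec.subspace_add vec.subspace_scale)
  qed
qed (simp add: vec.subspace_0[OF assms(1)])


section \<open>Finite field facts\<close>

lemma card_field_zero: "of_nat CARD('a::{field,finite}) = (0::'a)"
proof -
  have im: "(\<lambda>c::'a. c + 1) ` UNIV = UNIV"
    by (metis UNIV_I diff_add_cancel imageI subsetI subset_antisym)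
  have inj: "inj (\<lambda>c::'a. c + 1)" by (simp add: inj_def)
  have "(\<Sum>c\<in>(UNIV::'a set). c) = (\<Sum>c\<in>(\<lambda>c::'a. c + 1) ` UNIV. c)" by (simp only: im)
  also have "\<dots> = (\<Sum>c\<in>UNIV. c + 1)" by (simp only: sum.reindex[OF inj] comp_def)
  also have "\<dots> = (\<Sum>c\<in>UNIV. c) + of_nat CARD('a)"
    by (simp add: sum.distrib)
  finally show ?thesis by simp
qed

lemma field_pow_card: "(c::'a::{field,finite}) ^ CARD('a) = c"
proof (cases "c = 0")
  case True then show ?thesis by (simp add: zero_power)
next
  case False
  let ?S = "UNIV - {0::'a}"
  have im: "(\<lambda>x. c * x) ` ?S = ?S"
  proof
    show "(\<lambda>x. c * x) ` ?S \<subseteq> ?S" using False by auto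
    show "?S \<subseteq> (\<lambda>x. c * x) ` ?S"
    proof
      fix y assume "y \<in> ?S"
      then have "y = c * (y / c)" "y / c \<in> ?S" using False by auto
      then show "y \<in> (\<lambda>x. c * x) ` ?S" by blast
    qed
  qed
  have inj: "inj_on (\<lambda>x. c * x) ?S" using False by (simp add: inj_on_def)
  have "(\<Prod>x\<in>?S. x) = (\<Prod>x\<in>(\<lambda>x. c * x) ` ?S. x)" by (simp only: im)
  also have "\<dots> = (\<Prod>x\<in>?S. c * x)" by (simp only: prod.reindex[OF inj] comp_def)
  also have "\<dots> = c ^ card ?S * (\<Prod>x\<in>?S. x)"
    by (simp add: prod.distrib)
  finally have eq: "(\<Prod>x\<in>?S. x) = c ^ card ?S * (\<Prod>x\<in>?S. x)" .
  have P0: "(\<Prod>x\<in>?S. x) \<noteq> 0" by simp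
  have c1: "c ^ card ?S = 1" using eq P0 mult_cancel_right1 by metis
  have cs: "card ?S = CARD('a) - 1" by (simp add: card_Diff_subset)
  have "CARD('a) = Suc (CARD('a) - 1)" using finite_UNIV_card_ge_0[where 'a='a] by simp
  then have "c ^ CARD('a) = c * c ^ (CARD('a) - 1)" by (metis power_Suc)
  then show ?thesis using c1 cs by simp
qed

lemma field_pow_card_pow: "(c::'a::{field,finite}) ^ (CARD('a) ^ j) = c"
proof (induction j)
  case (Suc j)
  have "c ^ (CARD('a) ^ Suc j) = (c ^ (CARD('a) ^ j)) ^ CARD('a)"
    by (simp add: power_mult[symmetric] mult.commute)
  then show ?case using Suc by (simp add: field_pow_card)
qed simp

lemma card_choose_zero:
  assumes "0 < i" "i < CARD('a::{field,finite})"
  shows "of_nat (CARD('a) choose i) = (0::'a)"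
proof -
  let ?q = "CARD('a)"
  have eq: "([:1, 1:] :: 'a poly) ^ ?q = monom 1 ?q + 1"
  proof (rule poly_eqI_degree_lead_coeff[where n = ?q and A = UNIV])
    show "coeff ([:1, 1:] ^ ?q) ?q = coeff (monom 1 ?q + 1 :: 'a poly) ?q"
      using assms by (simp add: coeff_linear_poly_power coeff_1)
    show "?q \<le> card (UNIV :: 'a set)" by simp
    show "degree ([:1, 1:] ^ ?q :: 'a poly) \<le> ?q"
      using degree_power_le[of "[:1, 1:] :: 'a poly" ?q] by simp
    show "degree (monom 1 ?q + 1 :: 'a poly) \<le> ?q"
      by (simp add: degree_add_le degree_monom_le)
    fix z :: 'a
    show "poly ([:1, 1:] ^ ?q) z = poly (monom 1 ?q + 1) z"
      by (simp add: poly_monom field_pow_card add.commute)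
  qed
  have "coeff ([:1, 1:] ^ ?q :: 'a poly) i = of_nat (?q choose i)"
    using assms by (simp add: coeff_linear_poly_power)
  moreover have "coeff (monom 1 ?q + 1 :: 'a poly) i = 0"
    using assms by (simp add: coeff_1)
  ultimately show ?thesis using eq by simp
qed

lemma poly_frob_add:
  fixes a b :: "'a::{field,finite} poly"
  shows "(a + b) ^ CARD('a) = a ^ CARD('a) + b ^ CARD('a)"
proof -
  let ?q = "CARD('a)"
  have q1: "?q \<ge> 2"
  proof -
    have "card {0::'a, 1} \<le> CARD('a)" by (rule card_mono) auto
    then show ?thesis by simp
  qed
  have "(a + b) ^ ?q = (\<Sum>k\<le>?q. of_nat (?q choose k) * a ^ k * b ^ (?q - k))"
    by (rule binomial_ring)
  also have "\<dots> = (\<Sum>k\<in>{0, ?q}. of_nat (?q choose k) * a ^ k * b ^ (?q - k))"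
  proof (rule sum.mono_neutral_right)
    show "\<forall>k\<in>{..?q} - {0, ?q}. of_nat (?q choose k) * a ^ k * b ^ (?q - k) = 0"
    proof
      fix k assume k: "k \<in> {..?q} - {0, ?q}"
      have "(of_nat (?q choose k) :: 'a poly) = [:of_nat (?q choose k):]" by (rule of_nat_poly)
      also have "\<dots> = 0" using k card_choose_zero[of k, where 'a='a] by auto
      finally show "of_nat (?q choose k) * a ^ k * b ^ (?q - k) = 0" by simp
    qed
  qed auto
  also have "\<dots> = a ^ ?q + b ^ ?q" using q1 by (simp add: add.commute)
  finally show ?thesis .
qed

lemma poly_frob_add_pow:
  fixes a b :: "'a::{field,finite} poly"
  shows "(a + b) ^ (CARD('a) ^ j) = a ^ (CARD('a) ^ j) + b ^ (CARD('a) ^ j)"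
proof (induction j)
  case (Suc j)
  have "(a + b) ^ (CARD('a) ^ Suc j) = ((a + b) ^ (CARD('a) ^ j)) ^ CARD('a)"
    by (simp add: power_mult[symmetric] mult.commute)
  also have "\<dots> = (a ^ (CARD('a) ^ j)) ^ CARD('a) + (b ^ (CARD('a) ^ j)) ^ CARD('a)"
    by (simp add: Suc poly_frob_add)
  finally show ?case by (simp add: power_mult[symmetric] mult.commute)
qed simp

lemma poly_frob_compose:
  fixes p :: "'a::{field,finite} poly"
  shows "p ^ (CARD('a) ^ j) = pcompose p (monom 1 (CARD('a) ^ j))"
proof (induction p)
  case (pCons c p)
  let ?Q = "CARD('a) ^ j"
  have "pCons c p = [:c:] + monom 1 1 * p"
    by (simp add: monom_Suc monom_0 one_pCons)
  then have "pCons c p ^ ?Q = [:c:] ^ ?Q + (monom 1 1 * p) ^ ?Q"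
    by (simp add: poly_frob_add_pow)
  also have "[:c:] ^ ?Q = [:c:]" by (simp add: poly_const_pow field_pow_card_pow)
  also have "(monom 1 1 * p) ^ ?Q = monom 1 ?Q * pcompose p (monom 1 ?Q)"
    by (simp add: power_mult_distrib pCons monom_power)
  finally show ?case by (simp add: pcompose_pCons)
qed simp

lemma mpow_peval_frob:
  fixes A :: "'a::{field,finite}^'n^'n"
  shows "mpow (peval p A) (CARD('a) ^ j) = peval p (mpow A (CARD('a) ^ j))"
  by (simp add: peval_mpow poly_frob_compose peval_pcompose peval_monom1)


lemma card_subspace:
  fixes X :: "('a::{field,finite}^'n) set"
  assumes "vec.subspace X"
  shows "card X = CARD('a) ^ vec.dim X"
proof -
  obtain B where B: "B \<subseteq> X" "vec.independent B" "X \<subseteq> vec.span B" "card B = vec.dim X"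
    using vec.basis_exists by blast
  have fB: "finite B" using B(2) vec.finiteI_independent by blast
  have spanB: "vec.span B = X"
    using B(1,3) assms vec.span_mono vec.span_eq_iff by blast
  define f where "f = (\<lambda>c. \<Sum>v\<in>B. c v *s v)"
  have "bij_betw f (PiE B (\<lambda>_. UNIV :: 'a set)) X"
  proof (rule bij_betwI')
    fix c c' assume c: "c \<in> PiE B (\<lambda>_. UNIV :: 'a set)" and c': "c' \<in> PiE B (\<lambda>_. UNIV :: 'a set)"
    show "(f c = f c') = (c = c')"
    proof
      assume eq: "f c = f c'"
      have "(\<Sum>v\<in>B. (c v - c' v) *s v) = f c - f c'"
        by (simp add: f_def sum_subtractf vec.scale_left_diff_distrib)
      also have "\<dots> = 0" using eq by simp
      finally have z: "(\<Sum>v\<in>B. (\<lambda>v. c v - c' v) v *s v) = 0" by simp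
      have H: "\<forall>cc. (\<Sum>v\<in>B. cc v *s v) = 0 \<longrightarrow> (\<forall>v\<in>B. cc v = 0)"
        using B(2) unfolding vec.independent_explicit by blast
      have "\<forall>v\<in>B. c v - c' v = 0" using H[rule_format, OF z] by simp
      then show "c = c'" using c c' by (intro PiE_ext) auto
    qed simp
  next
    fix c assume "c \<in> PiE B (\<lambda>_. UNIV :: 'a set)"
    show "f c \<in> X" unfolding f_def using spanB vec.span_finite[OF fB] by blast
  next
    fix x assume "x \<in> X"
    then obtain u where u: "x = (\<Sum>v\<in>B. u v *s v)"
      using spanB vec.span_finite[OF fB] by blast
    show "\<exists>c\<in>PiE B (\<lambda>_. UNIV :: 'a set). x = f c"
      by (rule bexI[of _ "restrict u B"]) (auto simp: f_def u intro: sum.cong)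
  qed
  then have "card X = card (PiE B (\<lambda>_. UNIV :: 'a set))"
    by (simp add: bij_betw_same_card)
  also have "\<dots> = CARD('a) ^ card B" by (simp add: card_PiE fB)
  finally show ?thesis using B(4) by simp
qed

lemma subspace_mat_image:
  fixes X :: "('a::field^'n) set"
  assumes "vec.subspace X"
  shows "vec.subspace ((\<lambda>x. A *v x) ` X)"
  unfolding vec.subspace_def
proof (intro conjI ballI allI)
  show "0 \<in> (\<lambda>x. A *v x) ` X" using vec.subspace_0[OF assms] by force
next
  fix a b assume "a \<in> (\<lambda>x. A *v x) ` X" "b \<in> (\<lambda>x. A *v x) ` X"
  then obtain x y where "x \<in> X" "y \<in> X" "a = A *v x" "b = A *v y" by blast
  then show "a + b \<in> (\<lambda>x. A *v x) ` X"
    using vec.subspace_add[OF assms] by (force simp: matrix_vector_right_distrib[symmetric])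
next
  fix c a assume "a \<in> (\<lambda>x. A *v x) ` X"
  then obtain x where "x \<in> X" "a = A *v x" by blast
  then show "c *s a \<in> (\<lambda>x. A *v x) ` X"
    using vec.subspace_scale[OF assms] by (force simp: mvec_scale[symmetric])
qed


section \<open>Size bound for reduced commutative matrix algebras\<close>

lemma bound_lemma:
  fixes R :: "('a::{field,finite}^'n^'n) set" and Q :: nat
  assumes Radd: "\<And>r s. r \<in> R \<Longrightarrow> s \<in> R \<Longrightarrow> r + s \<in> R"
      and Rmul: "\<And>r s. r \<in> R \<Longrightarrow> s \<in> R \<Longrightarrow> r ** s \<in> R"
      and Rmat: "\<And>c. mat c \<in> R"
      and Rcomm: "\<And>r s. r \<in> R \<Longrightarrow> s \<in> R \<Longrightarrow> r ** s = s ** r"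
      and Q: "Q \<ge> 2"
  shows "vec.subspace X \<Longrightarrow> (\<forall>r\<in>R. \<forall>x\<in>X. r *v x \<in> X) \<Longrightarrow>
         (\<forall>r\<in>R. \<forall>x\<in>X. mpow r Q *v x = r *v x) \<Longrightarrow>
         card ((\<lambda>r. restrict (\<lambda>v. r *v v) X) ` R) \<le> card X"
proof (induction "vec.dim X" arbitrary: X rule: less_induct)
  case less
  note X = less.prems(1) and inv = less.prems(2) and frob = less.prems(3)
  have Rpow: "mpow r j \<in> R" if "r \<in> R" for r j
    using that by (induction j) (auto intro: Rmat Rmul)
  have Rneg: "mat (-1) ** r \<in> R" if "r \<in> R" for r using that by (intro Rmul Rmat)
  have negr: "(mat (-1) ** r) *v x = - (r *v x)" for r :: "'a^'n^'n" and x
    by (simp add: matrix_vector_mul_assoc[symmetric] mat_uminus_gen matrix_vector_uminus)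
  have Rdiff: "r + mat (-1) ** s \<in> R" if "r \<in> R" "s \<in> R" for r s
    using that by (intro Radd Rneg)
  have diffv: "(r + mat (-1) ** s) *v x = r *v x - s *v x" for r s :: "'a^'n^'n" and x
    by (simp add: matrix_vector_mult_add_rdistrib negr)
  define res where "res = (\<lambda>r::'a^'n^'n. restrict (\<lambda>v. r *v v) X)"
  have finX: "finite X" by simp
  show ?case
  proof (cases "\<forall>r\<in>R. (\<exists>x\<in>X. r *v x \<noteq> 0) \<longrightarrow> (\<forall>x\<in>X. r *v x = 0 \<longrightarrow> x = 0)")
    case True
    show ?thesis
    proof (cases "X \<subseteq> {0}")
      case True
      have X0: "X = {0}" using True vec.subspace_0[OF X] by blast
      have sub: "res ` R \<subseteq> {restrict (\<lambda>v. 0) X}"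
        by (auto simp: res_def restrict_def fun_eq_iff X0)
      have "card (res ` R) \<le> card {restrict (\<lambda>v. 0) X}" using card_mono[OF _ sub] by simp
      then have "card (res ` R) \<le> 1" by simp
      moreover have "card X = 1" using X0 by simp
      ultimately show ?thesis by (simp add: res_def)
    next
      case False
      then obtain x0 where x0: "x0 \<in> X" "x0 \<noteq> 0" by blast
      have "inj_on (\<lambda>f. f x0) (res ` R)"
      proof (rule inj_onI)
        fix f g assume "f \<in> res ` R" "g \<in> res ` R" and eq: "f x0 = g x0"
        then obtain r s where rs: "r \<in> R" "s \<in> R" "f = res r" "g = res s" by blast
        have "(r + mat (-1) ** s) *v x0 = 0" using eq x0 rs by (simp add: diffv res_def)
        have "\<forall>x\<in>X. (r + mat (-1) ** s) *v x = 0"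
        proof (rule ccontr)
          assume "\<not> (\<forall>x\<in>X. (r + mat (-1) ** s) *v x = 0)"
          then have "\<exists>x\<in>X. (r + mat (-1) ** s) *v x \<noteq> 0" by blast
          with True Rdiff[OF rs(1,2)] have "\<forall>x\<in>X. (r + mat (-1) ** s) *v x = 0 \<longrightarrow> x = 0"
            by blast
          then show False using x0 \<open>(r + mat (-1) ** s) *v x0 = 0\<close> by blast
        qed
        then have "\<forall>x\<in>X. r *v x = s *v x" by (simp add: diffv)
        then show "f = g" by (auto simp: rs res_def restrict_def fun_eq_iff)
      qed
      moreover have "(\<lambda>f. f x0) ` (res ` R) \<subseteq> X" using inv x0 by (auto simp: res_def)
      ultimately have "card (res ` R) \<le> card X" using card_inj_on_le finX by blast
      then show ?thesis by (simp add: res_def)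
    qed
  next
    case False
    then obtain y x1 where y: "y \<in> R" "\<exists>x\<in>X. y *v x \<noteq> 0" and x1: "x1 \<in> X" "y *v x1 = 0" "x1 \<noteq> 0"
      by blast
    define e where "e = mpow y (Q - 1)"
    have eR: "e \<in> R" using Rpow[OF y(1)] by (simp add: e_def)
    have Qe: "Q - 1 = Suc (Q - 2)" "Q = Suc (Q - 1)" using Q by auto
    have e_alt: "e = mpow y (Q - 2) ** y" unfolding e_def by (subst Qe(1)) (rule mpow_Suc')
    have ye: "y *v (e *v x) = y *v x" if "x \<in> X" for x
    proof -
      have "y ** e = mpow y (Suc (Q - 1))" by (simp add: e_def)
      also have "\<dots> = mpow y Q" using Qe(2) by simp
      finally have "y *v (e *v x) = mpow y Q *v x"
        by (simp add: matrix_vector_mul_assoc)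
      then show ?thesis using frob y(1) that by simp
    qed
    have ee: "e *v (e *v x) = e *v x" if "x \<in> X" for x
    proof -
      have qq: "(Q - 1) + (Q - 1) = (Q - 2) + Q" using Q by arith
      have "e ** e = mpow y (Q - 2) ** mpow y Q"
        unfolding e_def mpow_add[symmetric] qq ..
      then have "e *v (e *v x) = mpow y (Q - 2) *v (mpow y Q *v x)"
        by (simp add: matrix_vector_mul_assoc)
      also have "\<dots> = mpow y (Q - 2) *v (y *v x)" using frob y(1) that by simp
      also have "\<dots> = e *v x" by (simp add: e_alt matrix_vector_mul_assoc)
      finally show ?thesis .
    qed
    have ex1: "e *v x1 = 0" by (simp add: e_alt matrix_vector_mul_assoc[symmetric] x1)
    obtain x2 where x2': "x2 \<in> X" "y *v x2 \<noteq> 0" using y(2) by blast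
    have x2: "x2 \<in> X" "e *v x2 \<noteq> 0"
    proof -
      show "x2 \<in> X" by fact
      show "e *v x2 \<noteq> 0"
      proof
        assume "e *v x2 = 0"
        then have "y *v (e *v x2) = 0" by simp
        then show False using ye[OF x2'(1)] x2'(2) by simp
      qed
    qed
    define X1 where "X1 = (\<lambda>x. e *v x) ` X"
    define X2 where "X2 = (\<lambda>x. (mat 1 - e) *v x) ` X"
    have m1e: "(mat 1 - e) *v x = x - e *v x" for x by (simp add: matrix_vector_mult_diff_rdistrib)
    have X1s: "vec.subspace X1" unfolding X1_def by (rule subspace_mat_image[OF X])
    have X2s: "vec.subspace X2" unfolding X2_def by (rule subspace_mat_image[OF X])
    have eX: "e *v x \<in> X" if "x \<in> X" for x using inv eR that by blast
    have X1X: "X1 \<subseteq> X" using eX by (auto simp: X1_def)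
    have X2X: "X2 \<subseteq> X" using eX vec.subspace_diff[OF X] by (auto simp: X2_def m1e)
    have e1: "e *v a = a" if "a \<in> X1" for a using that ee by (auto simp: X1_def)
    have e2: "e *v b = 0" if "b \<in> X2" for b
      using that ee by (auto simp: X2_def m1e matrix_vector_mult_diff_distrib)
    have x1n: "x1 \<notin> X1" using e1 ex1 x1(3) by force
    have x2n: "e *v x2 \<notin> X2" using e2 ee[OF x2(1)] x2(2) by force
    have spanX: "vec.span X = X" using X by simp
    have sp1: "vec.span X1 = X1" using X1s by simp
    have sp2: "vec.span X2 = X2" using X2s by simp
    have d1: "vec.dim X1 < vec.dim X"
      apply (rule vec.dim_psubset) unfolding sp1 spanX using X1X x1n x1(1) by blast
    have d2: "vec.dim X2 < vec.dim X"
      apply (rule vec.dim_psubset) unfolding sp2 spanX using X2X x2n eX[OF x2(1)] by blast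
    have commR: "r *v (A *v x) = A *v (r *v x)" if "r \<in> R" "A \<in> R" for r A x
      by (simp add: matrix_vector_mul_assoc Rcomm[OF that])
    have inv1: "\<forall>r\<in>R. \<forall>x\<in>X1. r *v x \<in> X1"
      using inv commR[OF _ eR] by (auto simp: X1_def)
    have inv2: "\<forall>r\<in>R. \<forall>x\<in>X2. r *v x \<in> X2"
    proof (intro ballI)
      fix r x assume r: "r \<in> R" and "x \<in> X2"
      then obtain z where z: "z \<in> X" "x = z - e *v z" by (auto simp: X2_def m1e)
      have "r *v x = r *v z - e *v (r *v z)"
        using z commR[OF r eR] by (simp add: matrix_vector_mult_diff_distrib)
      then show "r *v x \<in> X2" using inv r z(1) by (auto simp: X2_def m1e)
    qed
    have IH1: "card ((\<lambda>r. restrict (\<lambda>v. r *v v) X1) ` R) \<le> card X1"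
      using less.hyps[OF d1 X1s inv1] frob X1X by blast
    have IH2: "card ((\<lambda>r. restrict (\<lambda>v. r *v v) X2) ` R) \<le> card X2"
      using less.hyps[OF d2 X2s inv2] frob X2X by blast
    have bij: "bij_betw (\<lambda>(a, b). a + b) (X1 \<times> X2) X"
    proof (rule bij_betwI')
      fix p p' assume p: "p \<in> X1 \<times> X2" and p': "p' \<in> X1 \<times> X2"
      obtain a b a' b' where ab: "p = (a, b)" "p' = (a', b')" by (cases p, cases p')
      have "a = e *v (a + b)" using p ab e1 e2 by (auto simp: matrix_vector_right_distrib)
      moreover have "a' = e *v (a' + b')" using p' ab e1 e2 by (auto simp: matrix_vector_right_distrib)
      ultimately show "((\<lambda>(a, b). a + b) p = (\<lambda>(a, b). a + b) p') = (p = p')"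
        using ab by auto
    next
      fix p assume "p \<in> X1 \<times> X2" then show "(\<lambda>(a, b). a + b) p \<in> X"
        using X1X X2X vec.subspace_add[OF X] by auto
    next
      fix x assume x: "x \<in> X"
      have "x = e *v x + (mat 1 - e) *v x" by (simp add: m1e)
      moreover have "(e *v x, (mat 1 - e) *v x) \<in> X1 \<times> X2" using x by (auto simp: X1_def X2_def)
      ultimately show "\<exists>p\<in>X1 \<times> X2. x = (\<lambda>(a, b). a + b) p" by force
    qed
    have cardX: "card X = card X1 * card X2"
      using bij_betw_same_card[OF bij] by (simp add: card_cartesian_product)
    define F where "F = (\<lambda>f::'a^'n \<Rightarrow> 'a^'n. (restrict f X1, restrict f X2))"
    have "inj_on F (res ` R)"
    proof (rule inj_onI)
      fix f g assume "f \<in> res ` R" "g \<in> res ` R" and eq: "F f = F g"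
      then obtain r s where rs: "r \<in> R" "s \<in> R" "f = res r" "g = res s" by blast
      have a1: "\<forall>x\<in>X1. r *v x = s *v x"
      proof
        fix x assume x: "x \<in> X1"
        have "restrict f X1 x = restrict g X1 x" using eq by (simp add: F_def)
        then show "r *v x = s *v x" using x X1X rs by (auto simp: res_def)
      qed
      have a2: "\<forall>x\<in>X2. r *v x = s *v x"
      proof
        fix x assume x: "x \<in> X2"
        have "restrict f X2 x = restrict g X2 x" using eq by (simp add: F_def)
        then show "r *v x = s *v x" using x X2X rs by (auto simp: res_def)
      qed
      have "r *v x = s *v x" if x: "x \<in> X" for x
      proof -
        have "x = e *v x + (mat 1 - e) *v x" by (simp add: m1e)
        moreover have "e *v x \<in> X1" "(mat 1 - e) *v x \<in> X2" using x by (auto simp: X1_def X2_def)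
        ultimately have "r *v x = r *v (e *v x) + r *v ((mat 1 - e) *v x)"
          "s *v x = s *v (e *v x) + s *v ((mat 1 - e) *v x)"
          by (metis matrix_vector_right_distrib)+
        then show ?thesis using a1 a2 \<open>e *v x \<in> X1\<close> \<open>(mat 1 - e) *v x \<in> X2\<close> by simp
      qed
      then show "f = g" by (auto simp: rs res_def restrict_def fun_eq_iff)
    qed
    moreover have "F ` (res ` R) \<subseteq> ((\<lambda>r. restrict (\<lambda>v. r *v v) X1) ` R) \<times> ((\<lambda>r. restrict (\<lambda>v. r *v v) X2) ` R)"
    proof
      fix p assume "p \<in> F ` (res ` R)"
      then obtain r where r: "r \<in> R" "p = F (res r)" by blast
      have "restrict (res r) X1 = restrict (\<lambda>v. r *v v) X1" using X1X
        by (auto simp: res_def restrict_def fun_eq_iff)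
      moreover have "restrict (res r) X2 = restrict (\<lambda>v. r *v v) X2" using X2X
        by (auto simp: res_def restrict_def fun_eq_iff)
      ultimately show "p \<in> ((\<lambda>r. restrict (\<lambda>v. r *v v) X1) ` R) \<times> ((\<lambda>r. restrict (\<lambda>v. r *v v) X2) ` R)"
        using r by (auto simp: F_def)
    qed
    ultimately have "card (res ` R) \<le> card (((\<lambda>r. restrict (\<lambda>v. r *v v) X1) ` R) \<times> ((\<lambda>r. restrict (\<lambda>v. r *v v) X2) ` R))"
      by (intro card_inj_on_le) auto
    also have "\<dots> \<le> card X1 * card X2"
      using IH1 IH2 by (simp add: card_cartesian_product mult_le_mono)
    finally show ?thesis using cardX by (simp add: res_def)
  qed
qed


section \<open>Singer cycles act regularly\<close>

lemma card_ge2: "CARD('a::field) \<ge> 2 \<or> \<not> finite (UNIV :: 'a set)"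
proof (cases "finite (UNIV :: 'a set)")
  case True
  have "card {0::'a, 1} \<le> CARD('a)" by (rule card_mono[OF True]) auto
  then show ?thesis by simp
qed simp

lemma card_ge2_fin: "CARD('a::{field,finite}) \<ge> 2"
  using card_ge2[where 'a='a] by simp

locale sblock =
  fixes t :: "'a::{field,finite}^'n^'n" and X :: "('a^'n) set"
  assumes X: "vec.subspace X" and dimX: "vec.dim X \<ge> 1" and sing: "singer_on t X"
begin

definition N where "N = CARD('a) ^ vec.dim X - 1"

lemma tX: "x \<in> X \<Longrightarrow> t *v x \<in> X"
  using sing by (simp add: singer_on_def)

lemma powX: "x \<in> X \<Longrightarrow> mpow t j *v x \<in> X"
  by (induction j) (auto simp: matrix_vector_mul_assoc[symmetric] tX)

lemma Npos: "N > 0"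
  using sing by (simp add: singer_on_def N_def Let_def)

lemma Nid: "x \<in> X \<Longrightarrow> mpow t N *v x = x"
  using sing by (simp add: singer_on_def N_def Let_def mpow_iter)

lemma Nmin: "0 < m \<Longrightarrow> m < N \<Longrightarrow> \<exists>x\<in>X. mpow t m *v x \<noteq> x"
  using sing by (simp add: singer_on_def N_def Let_def mpow_iter)

lemma Nmult: "x \<in> X \<Longrightarrow> mpow t (N * c) *v x = x"
proof (induction c arbitrary: x)
  case (Suc c)
  have "mpow t (N * Suc c) *v x = mpow t N *v (mpow t (N * c) *v x)"
    by (simp add: mpow_add matrix_vector_mul_assoc)
  then show ?case using Suc Nid by simp
qed simp

lemma per: "(\<forall>x\<in>X. mpow t m *v x = x) \<longleftrightarrow> N dvd m"
proof
  assume H: "\<forall>x\<in>X. mpow t m *v x = x"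
  show "N dvd m"
  proof (rule ccontr)
    assume nd: "\<not> N dvd m"
    have "m = m mod N + N * (m div N)" by simp
    then have "mpow t m = mpow t (m mod N) ** mpow t (N * (m div N))"
      by (metis mpow_add)
    then have "\<forall>x\<in>X. mpow t (m mod N) *v x = x"
      using H Nmult by (metis matrix_vector_mul_assoc)
    moreover have "m mod N \<noteq> 0" using nd by (simp add: dvd_eq_mod_eq_0)
    moreover have "m mod N < N" using Npos by simp
    ultimately show False using Nmin[of "m mod N"] by auto
  qed
next
  assume "N dvd m"
  then obtain c where "m = N * c" by blast
  then show "\<forall>x\<in>X. mpow t m *v x = x" using Nmult by simp
qed

lemma exists_nonzero: "\<exists>x\<in>X. x \<noteq> 0"
proof (rule ccontr)
  assume "\<not> (\<exists>x\<in>X. x \<noteq> 0)"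
  then have "X \<subseteq> {0}" by auto
  then have "vec.dim X = 0" using vec.dim_eq_0 by blast
  with dimX show False by simp
qed

lemma cardX: "card X = N + 1"
proof -
  have "CARD('a) ^ vec.dim X \<ge> 1" using card_ge2_fin[where 'a='a] by simp
  then show ?thesis using card_subspace[OF X] by (simp add: N_def)
qed

lemma pow_back: "x \<in> X \<Longrightarrow> j \<le> N \<Longrightarrow> mpow t (N - j) *v (mpow t j *v x) = x"
  by (simp add: matrix_vector_mul_assoc mpow_add[symmetric] Nid)

lemma nonzero_pow: "x \<in> X \<Longrightarrow> x \<noteq> 0 \<Longrightarrow> j \<le> N \<Longrightarrow> mpow t j *v x \<noteq> 0"
  using pow_back by force

lemma shift: "x \<in> X \<Longrightarrow> i \<le> j \<Longrightarrow> mpow t j *v x = mpow t (j - i) *v (mpow t i *v x)"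
  by (simp add: matrix_vector_mul_assoc mpow_add[symmetric])

lemma pow_front: "y \<in> X \<Longrightarrow> i \<le> N \<Longrightarrow> mpow t i *v (mpow t (N - i) *v y) = y"
proof -
  assume y: "y \<in> X" and i: "i \<le> N"
  have "i + (N - i) = N" using i by simp
  then have "mpow t i ** mpow t (N - i) = mpow t N" by (metis mpow_add)
  then show ?thesis using Nid[OF y] by (simp add: matrix_vector_mul_assoc)
qed

lemma no_coincide:
  assumes ij: "i < j" "j < N" and agree: "\<forall>x\<in>X. mpow t i *v x = mpow t j *v x"
  shows False
proof -
  have H: "\<forall>y\<in>X. mpow t (j - i) *v y = y"
  proof
    fix y assume y: "y \<in> X"
    define x where "x = mpow t (N - i) *v y"
    have x: "x \<in> X" using powX y by (simp add: x_def)
    have xy: "mpow t i *v x = y" using pow_front[OF y, of i] ij by (simp add: x_def)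
    have sh: "mpow t j *v x = mpow t (j - i) *v (mpow t i *v x)"
      using shift[OF x, of i j] ij by simp
    have "mpow t (j - i) *v y = mpow t (j - i) *v (mpow t i *v x)" using xy by simp
    also have "\<dots> = mpow t j *v x" using sh by simp
    also have "\<dots> = mpow t i *v x" using agree x by simp
    finally show "mpow t (j - i) *v y = y" using xy by simp
  qed
  have d: "N dvd (j - i)" using per[of "j - i"] H by simp
  have "0 < j - i" using ij by simp
  from dvd_imp_le[OF d this] have "N \<le> j - i" .
  then show False using ij by simp
qed

definition res where "res r = restrict (\<lambda>v. r *v v) X"

lemma alg_structure:
  "\<forall>p. res (peval p t) = res 0 \<or> (\<exists>j<N. res (peval p t) = res (mpow t j))"
proof -
  define Q where "Q = CARD('a) ^ vec.dim X"
  have QN: "Q = Suc N" using card_ge2_fin[where 'a='a] by (simp add: Q_def N_def)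
  have Q2: "Q \<ge> 2" using QN Npos by simp
  let ?R = "range (\<lambda>p. peval p t)"
  have inv: "\<forall>r\<in>?R. \<forall>x\<in>X. r *v x \<in> X"
    using peval_agree[OF X] tX by blast
  have tQ: "\<forall>x\<in>X. mpow t Q *v x = t *v x"
    using Nid by (simp add: QN mpow_Suc' matrix_vector_mul_assoc[symmetric])
  have tQX: "\<forall>x\<in>X. mpow t Q *v x \<in> X" using powX by blast
  have frob: "\<forall>r\<in>?R. \<forall>x\<in>X. mpow r Q *v x = r *v x"
  proof (intro ballI)
    fix r x assume "r \<in> ?R" "x \<in> X"
    then obtain p where p: "r = peval p t" by blast
    have "mpow r Q = peval p (mpow t Q)" unfolding p Q_def by (rule mpow_peval_frob)
    then show "mpow r Q *v x = r *v x"
      using peval_agree[OF X tQX _ tQ, of p] tX \<open>x \<in> X\<close> p by auto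
  qed
  have a1: "r + s \<in> ?R" if "r \<in> ?R" "s \<in> ?R" for r s
    using that by (auto simp: peval_add[symmetric])
  have a2: "r ** s \<in> ?R" if "r \<in> ?R" "s \<in> ?R" for r s
    using that by (auto simp: peval_mult[symmetric])
  have a3: "mat c \<in> ?R" for c by (metis peval_const rangeI)
  have a4: "r ** s = s ** r" if "r \<in> ?R" "s \<in> ?R" for r s
    using that peval_comm by auto
  have bound: "card (res ` ?R) \<le> card X"
    unfolding res_def
    by (rule bound_lemma[OF a1 a2 a3 a4 Q2 X inv frob])
  define P where "P = (\<lambda>j. res (mpow t j)) ` {..<N} \<union> {res 0}"
  have inj: "inj_on (\<lambda>j. res (mpow t j)) {..<N}"
  proof (rule inj_onI)
    fix i j assume ij: "i \<in> {..<N}" "j \<in> {..<N}" and eq: "res (mpow t i) = res (mpow t j)"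
    have agree: "\<forall>x\<in>X. mpow t i *v x = mpow t j *v x"
    proof
      fix x assume "x \<in> X"
      have "res (mpow t i) x = res (mpow t j) x" using eq by simp
      then show "mpow t i *v x = mpow t j *v x" using \<open>x \<in> X\<close> by (simp add: res_def)
    qed
    show "i = j"
    proof (rule ccontr)
      assume "i \<noteq> j"
      then consider "i < j" | "j < i" by linarith
      then show False
      proof cases
        case 1 then show False using no_coincide[of i j] agree ij by simp
      next
        case 2 then show False using no_coincide[of j i] agree ij by simp
      qed
    qed
  qed
  have notin: "res 0 \<notin> (\<lambda>j. res (mpow t j)) ` {..<N}"
  proof
    assume "res 0 \<in> (\<lambda>j. res (mpow t j)) ` {..<N}"
    then obtain j where j: "j < N" "res 0 = res (mpow t j)" by auto
    obtain x0 where x0: "x0 \<in> X" "x0 \<noteq> 0" using exists_nonzero by blast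
    have "res 0 x0 = res (mpow t j) x0" using j by simp
    then have "mpow t j *v x0 = 0" using x0 by (simp add: res_def)
    then show False using nonzero_pow[OF x0] j by simp
  qed
  have cardP: "card P = N + 1"
  proof -
    have "card ((\<lambda>j. res (mpow t j)) ` {..<N}) = N" using card_image[OF inj] by simp
    then show ?thesis unfolding P_def using notin by simp
  qed
  have PR: "P \<subseteq> res ` ?R"
  proof
    fix f assume "f \<in> P"
    then consider (a) j where "f = res (mpow t j)" | (b) "f = res 0" unfolding P_def by blast
    then show "f \<in> res ` ?R"
    proof cases
      case a
      then have "f = res (peval (monom 1 j) t)" by (simp add: peval_monom1)
      then show ?thesis by blast
    next
      case b
      then have "f = res (peval 0 t)" by simp
      then show ?thesis by blast
    qed
  qed
  have finR: "finite (res ` ?R)" by (rule finite_subset[OF subset_UNIV]) simp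
  have "P = res ` ?R"
    by (rule card_seteq[OF finR PR]) (use bound cardX cardP in simp)
  then show ?thesis unfolding P_def by auto
qed

lemma free_act: "x \<in> X \<Longrightarrow> x \<noteq> 0 \<Longrightarrow> mpow t m *v x = x \<Longrightarrow> N dvd m"
proof -
  assume x: "x \<in> X" "x \<noteq> 0" "mpow t m *v x = x"
  define r where "r = peval (monom 1 m - 1) t"
  have r: "r = mpow t m - mat 1" by (simp add: r_def peval_diff peval_monom1)
  have rx: "r *v x = 0" using x by (simp add: r matrix_vector_mult_diff_rdistrib)
  from alg_structure[rule_format, of "monom 1 m - 1"]
  consider "res r = res 0" | j where "j < N" "res r = res (mpow t j)" unfolding r_def by blast
  then show "N dvd m"
  proof cases
    case 1
    have "\<forall>y\<in>X. mpow t m *v y = y"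
    proof
      fix y assume "y \<in> X"
      have "res r y = res 0 y" using 1 by simp
      then show "mpow t m *v y = y" using \<open>y \<in> X\<close>
        by (simp add: res_def r matrix_vector_mult_diff_rdistrib)
    qed
    then show ?thesis using per by blast
  next
    case 2
    have "res r x = res (mpow t j) x" using 2 by simp
    then have "mpow t j *v x = 0" using x rx by (simp add: res_def)
    then show ?thesis using nonzero_pow[OF x(1,2)] 2 by simp
  qed
qed

lemma transit: "x \<in> X \<Longrightarrow> y \<in> X \<Longrightarrow> x \<noteq> 0 \<Longrightarrow> y \<noteq> 0 \<Longrightarrow> \<exists>j<N. mpow t j *v x = y"
proof -
  assume x: "x \<in> X" "x \<noteq> 0" and y: "y \<in> X" "y \<noteq> 0"
  have inj: "inj_on (\<lambda>j. mpow t j *v x) {..<N}"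
  proof (rule inj_onI)
    have gen: "N dvd (b - a)" if ab: "a < b" "mpow t a *v x = mpow t b *v x" "b < N" for a b
    proof -
      define z where "z = mpow t a *v x"
      have z1: "z \<in> X" using powX[OF x(1)] by (simp add: z_def)
      have z2: "z \<noteq> 0" using nonzero_pow[OF x(1) x(2), of a] ab by (simp add: z_def)
      note z = z1 z2
      have "mpow t (b - a) *v z = z" using shift[OF x(1), of a b] ab by (simp add: z_def)
      then show ?thesis using free_act z by blast
    qed
    fix i j assume ij: "i \<in> {..<N}" "j \<in> {..<N}" "mpow t i *v x = mpow t j *v x"
    show "i = j"
    proof (rule ccontr)
      assume "i \<noteq> j"
      then consider "i < j" | "j < i" by linarith
      then show False
      proof cases
        case 1
        have "N dvd (j - i)" using gen[OF 1 ij(3)] ij by simp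
        then show False using 1 ij by (auto dest: dvd_imp_le)
      next
        case 2
        have "N dvd (i - j)" using gen[OF 2 ij(3)[symmetric]] ij by simp
        then show False using 2 ij by (auto dest: dvd_imp_le)
      qed
    qed
  qed
  have sub: "(\<lambda>j. mpow t j *v x) ` {..<N} \<subseteq> X - {0}"
    using powX x nonzero_pow by auto
  have "card (X - {0}) = N" using cardX vec.subspace_0[OF X] by simp
  then have "(\<lambda>j. mpow t j *v x) ` {..<N} = X - {0}"
    using card_image[OF inj] by (intro card_seteq[OF _ sub]) auto
  moreover have "y \<in> X - {0}" using y by simp
  ultimately obtain j where "j \<in> {..<N}" "y = mpow t j *v x" by blast
  then show ?thesis by blast
qed

end


context sblock begin

lemma scalar_pow: "c \<noteq> 0 \<Longrightarrow> \<exists>j. \<forall>x\<in>X. mpow t j *v x = c *s x"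
proof -
  assume False: "c \<noteq> 0"
  obtain u0 where u0: "u0 \<in> X" "u0 \<noteq> 0" using exists_nonzero by blast
  have cu0: "c *s u0 \<in> X" "c *s u0 \<noteq> 0" using u0 False vec.subspace_scale[OF X] by auto
  obtain j where j: "mpow t j *v u0 = c *s u0" using transit[OF u0(1) cu0(1) u0(2) cu0(2)] by blast
  have "\<forall>x\<in>X. mpow t j *v x = c *s x"
  proof
    fix x assume x: "x \<in> X"
    show "mpow t j *v x = c *s x"
    proof (cases "x = 0")
      case False
      obtain i where i: "mpow t i *v u0 = x" using transit[OF u0(1) x u0(2) False] by blast
      have "mpow t j *v x = (mpow t j ** mpow t i) *v u0" by (simp add: i[symmetric] matrix_vector_mul_assoc)
      also have "\<dots> = mpow t i *v (mpow t j *v u0)" by (simp add: mpow_comm matrix_vector_mul_assoc)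
      also have "\<dots> = c *s x" by (simp add: j mvec_scale i)
      finally show ?thesis .
    qed simp
  qed
  then show ?thesis by blast
qed

lemma fill: 
  assumes Y: "\<forall>j. \<forall>y\<in>Y. mpow t j *v y \<in> Y" "0 \<in> Y" and x: "x \<in> X" "x \<noteq> 0" "x \<in> Y"
  shows "X \<subseteq> Y"
proof
  fix z assume z: "z \<in> X"
  show "z \<in> Y"
  proof (cases "z = 0")
    case False
    obtain j where "mpow t j *v x = z" using transit[OF x(1) z x(2) False] by blast
    then show ?thesis using Y x by blast
  qed (use Y in simp)
qed

end

lemma pow_minus1_dvd:
  fixes q :: nat assumes "q \<ge> 1" shows "(q ^ a - 1) dvd (q ^ (a * c) - 1)"
proof (induction c)
  case (Suc c)
  have p1: "q ^ a \<ge> 1" "q ^ (a * c) \<ge> 1" using assms by simp_all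
  have "q ^ (a * Suc c) - 1 = q ^ a * (q ^ (a * c) - 1) + (q ^ a - 1)"
    using p1 by (simp add: power_add algebra_simps)
  then show ?case using Suc by (simp add: dvd_add)
qed simp

lemma pow_minus1_dvd_rev:
  fixes q :: nat assumes q: "q \<ge> 2" shows "(q ^ a - 1) dvd (q ^ b - 1) \<Longrightarrow> a dvd b"
proof (induction b rule: less_induct)
  case (less b)
  show ?case
  proof (cases "b < a")
    case True
    have "q ^ b < q ^ a" using True q by (simp add: power_strict_increasing)
    then have "q ^ b - 1 < q ^ a - 1" using q by (simp add: diff_less_mono)
    then have "q ^ b - 1 = 0" using less.prems by (metis dvd_imp_le not_le neq0_conv)
    then have "b = 0"
    proof -
      assume b0: "q ^ b - 1 = 0"
      show "b = 0"
      proof (rule ccontr)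
        assume "b \<noteq> 0"
        then have "1 < q ^ b" using q by (intro one_less_power) auto
        then show False using b0 by simp
      qed
    qed
    then show ?thesis by simp
  next
    case False
    show ?thesis
    proof (cases "a = 0")
      case True
      then have "q ^ b - 1 = 0" using less.prems by simp
      then have "b = 0"
      proof -
        assume b0: "q ^ b - 1 = 0"
        show "b = 0"
        proof (rule ccontr)
          assume "b \<noteq> 0"
          then have "1 < q ^ b" using q by (intro one_less_power) auto
          then show False using b0 by simp
        qed
      qed
      then show ?thesis by simp
    next
      case a0: False
      have p1: "q ^ a \<ge> 1" "q ^ (b - a) \<ge> 1" using q by simp_all
      have bab: "b = (b - a) + a" using False by simp
      have "q ^ b - 1 = q ^ (b - a) * (q ^ a - 1) + (q ^ (b - a) - 1)"
        using p1 by (subst bab) (simp add: power_add algebra_simps)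
      then have "(q ^ a - 1) dvd (q ^ (b - a) - 1)"
        using less.prems by (metis dvd_add_right_iff dvd_triv_right)
      then have "a dvd (b - a)" using less.IH[of "b - a"] a0 False by simp
      then show ?thesis using False by (metis bab dvd_add_triv_right_iff)
    qed
  qed
qed


locale mctx =
  fixes t :: "'a::{field,finite}^'n^'n" and U W :: "('a^'n) set" and T :: "('a^'n^'n) set" and k :: nat
  assumes k1: "1 \<le> k" and k2: "2 * k < CARD('n)"
    and Us: "vec.subspace U" and Ud: "vec.dim U = k"
    and Ws: "vec.subspace W" and Wd: "vec.dim W = CARD('n) - k"
    and UW0: "U \<inter> W = {0}" and UWsum: "{u + w | u w. u \<in> U \<and> w \<in> W} = UNIV"
    and tT: "type_T t U W"
    and Tmax: "maximal_subring T" and tinT: "t \<in> T"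
begin

sublocale bU: sblock t U
  using Us Ud k1 tT by unfold_locales (auto simp: type_T_def)

sublocale bW: sblock t W
  using Ws Wd k2 tT by unfold_locales (auto simp: type_T_def)

abbreviation "N1 \<equiv> bU.N"
abbreviation "N2 \<equiv> bW.N"

lemma N1_def': "N1 = CARD('a) ^ k - 1" by (simp add: bU.N_def Ud)
lemma N2_def': "N2 = CARD('a) ^ (CARD('n) - k) - 1" by (simp add: bW.N_def Wd)

lemma N12: "0 < N1" "N1 < N2"
proof -
  show "0 < N1" by (rule bU.Npos)
  have "k < CARD('n) - k" using k2 by simp
  then have "CARD('a) ^ k < CARD('a) ^ (CARD('n) - k)"
    using card_ge2_fin[where 'a='a] by (intro power_strict_increasing) auto
  moreover have "CARD('a) ^ k \<ge> 1" using card_ge2_fin[where 'a='a] by simp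
  ultimately show "N1 < N2" unfolding N1_def' N2_def' by linarith
qed

lemma Tsub: "is_subring T" using Tmax by (simp add: maximal_subring_def)
lemma Tne: "T \<noteq> UNIV" using Tmax by (simp add: maximal_subring_def)
lemma T0: "0 \<in> T" using Tsub by (simp add: is_subring_def)
lemma Tdiff: "A \<in> T \<Longrightarrow> B \<in> T \<Longrightarrow> A - B \<in> T" using Tsub by (simp add: is_subring_def)
lemma Tmul: "A \<in> T \<Longrightarrow> B \<in> T \<Longrightarrow> A ** B \<in> T" using Tsub by (simp add: is_subring_def)
lemma Tneg: "A \<in> T \<Longrightarrow> - A \<in> T" using Tdiff[OF T0] by (metis diff_0)
lemma Tadd: "A \<in> T \<Longrightarrow> B \<in> T \<Longrightarrow> A + B \<in> T" using Tdiff[OF _ Tneg] by (metis diff_minus_eq_add)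
lemma Tsum: "(\<And>i. i \<in> S \<Longrightarrow> f i \<in> T) \<Longrightarrow> sum f S \<in> T"
  by (induction S rule: infinite_finite_induct) (auto intro: Tadd T0)

lemma decomp: "\<exists>u\<in>U. \<exists>w\<in>W. v = u + w"
  using UWsum by blast

lemma decomp_unique: "u \<in> U \<Longrightarrow> w \<in> W \<Longrightarrow> u' \<in> U \<Longrightarrow> w' \<in> W \<Longrightarrow> u + w = u' + w' \<Longrightarrow> u = u' \<and> w = w'"
proof -
  assume a: "u \<in> U" "w \<in> W" "u' \<in> U" "w' \<in> W" "u + w = u' + w'"
  have "u - u' = w' - w" using a(5) by (simp add: algebra_simps)
  moreover have "u - u' \<in> U" using a vec.subspace_diff[OF Us] by blast
  moreover have "w' - w \<in> W" using a vec.subspace_diff[OF Ws] by blast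
  ultimately have "u - u' = 0" using UW0 by (metis IntI singletonD)
  then show ?thesis using a(5) by simp
qed

lemma mat_eq_UW:
  assumes "\<forall>x\<in>U. A *v x = B *v x" "\<forall>x\<in>W. A *v x = B *v x"
  shows "A = B"
proof -
  have "A *v v = B *v v" for v
  proof -
    obtain u w where "u \<in> U" "w \<in> W" "v = u + w" using decomp by blast
    then show ?thesis using assms by (simp add: matrix_vector_right_distrib)
  qed
  then show ?thesis by (simp add: matrix_eq)
qed

lemma powSucT: "mpow t (Suc m) \<in> T"
proof (induction m)
  case 0 then show ?case using tinT by simp
next
  case (Suc m) then show ?case using Tmul[OF tinT] by simp
qed

lemma mpow_N1N2: "mpow t (N1 * N2) = mat 1"
proof (rule mat_eq_UW)
  show "\<forall>x\<in>U. mpow t (N1 * N2) *v x = mat 1 *v x" using bU.Nmult by simp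
  show "\<forall>x\<in>W. mpow t (N1 * N2) *v x = mat 1 *v x" using bW.Nmult by (simp add: mult.commute)
qed

lemma idT: "mat 1 \<in> T"
proof -
  have "N1 * N2 = Suc (N1 * N2 - 1)" using N12 by simp
  then show ?thesis using powSucT[of "N1 * N2 - 1"] mpow_N1N2 by metis
qed

lemma powT: "mpow t m \<in> T"
proof (cases m)
  case 0 then show ?thesis using idT by simp
next
  case (Suc m') then show ?thesis using powSucT[of m'] by simp
qed

definition eU where "eU = - (\<Sum>i<N2. mpow t (N1 * i))"
definition eW where "eW = mat 1 - eU"

lemma eUT: "eU \<in> T" unfolding eU_def by (intro Tneg Tsum powT)
lemma eWT: "eW \<in> T" unfolding eW_def by (intro Tdiff idT eUT)

lemma ofnat_N2: "(of_nat N2 :: 'a) = -1"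
proof -
  have ge: "CARD('a) ^ (CARD('n) - k) \<ge> 1" using card_ge2_fin[where 'a='a] by simp
  have pos: "CARD('n) - k > 0" using k2 by simp
  have "(of_nat (CARD('a) ^ (CARD('n) - k)) :: 'a) = of_nat (CARD('a)) ^ (CARD('n) - k)" by simp
  also have "\<dots> = 0" using pos card_field_zero[where 'a='a] by simp
  finally have z: "(of_nat (CARD('a) ^ (CARD('n) - k)) :: 'a) = 0" .
  have "(of_nat N2 :: 'a) = of_nat (CARD('a) ^ (CARD('n) - k)) - 1"
    using ge by (simp add: N2_def' of_nat_diff)
  then show ?thesis using z by simp
qed

lemma matrix_vsum: "A *v (\<Sum>i\<in>S. f i) = (\<Sum>i\<in>S. A *v f i)"
  by (induction S rule: infinite_finite_induct) (auto simp: matrix_vector_right_distrib)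

lemma eU_U: "x \<in> U \<Longrightarrow> eU *v x = x"
proof -
  assume x: "x \<in> U"
  have "eU *v x = - (\<Sum>i<N2. mpow t (N1 * i) *v x)"
    by (simp add: eU_def matrix_vector_uminus matrix_sum_vec)
  also have "\<dots> = - (\<Sum>i<N2. x)" using bU.Nmult[OF x] by simp
  also have "\<dots> = x"
  proof -
    have "(\<Sum>i<N2. x) $ j = - (x $ j)" for j
      by (simp only: sum_component) (simp add: ofnat_N2)
    then show ?thesis by (simp add: vec_eq_iff)
  qed
  finally show ?thesis .
qed

lemma eU_W: "x \<in> W \<Longrightarrow> eU *v x = 0"
proof -
  assume x: "x \<in> W"
  define a where "a i = mpow t (N1 * i) *v x" for i
  define S where "S = (\<Sum>i<N2. a i)"
  have aW: "a i \<in> W" for i using bW.powX[OF x] by (simp add: a_def)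
  have SW: "S \<in> W" unfolding S_def by (rule vec.subspace_sum[OF Ws aW])
  have step: "mpow t N1 *v a i = a (Suc i)" for i
    by (simp add: a_def matrix_vector_mul_assoc mpow_add[symmetric])
  have "mpow t N1 *v S = (\<Sum>i<N2. a (Suc i))" by (simp add: S_def matrix_vsum step)
  also have "\<dots> = (\<Sum>i<N2. a (Suc i) - a i) + S" by (simp add: S_def sum_subtractf)
  also have "(\<Sum>i<N2. a (Suc i) - a i) = a N2 - a 0" by (rule sum_lessThan_telescope)
  also have "a N2 = x" using bW.Nmult[OF x, of N1] by (simp add: a_def mult.commute)
  also have "a 0 = x" by (simp add: a_def)
  finally have fix1: "mpow t N1 *v S = S" by simp
  have "S = 0"
  proof (rule ccontr)
    assume "S \<noteq> 0"
    then have "N2 dvd N1" using bW.free_act[OF SW _ fix1] by simp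
    then show False using N12 by (auto dest: dvd_imp_le)
  qed
  then show "eU *v x = 0" by (simp add: eU_def matrix_vector_uminus matrix_sum_vec S_def a_def)
qed

lemma eW_U: "x \<in> U \<Longrightarrow> eW *v x = 0"
  by (simp add: eW_def matrix_vector_mult_diff_rdistrib eU_U)
lemma eW_W: "x \<in> W \<Longrightarrow> eW *v x = x"
  by (simp add: eW_def matrix_vector_mult_diff_rdistrib eU_W)

lemma eU_in: "eU *v v \<in> U" and eW_in: "eW *v v \<in> W" and eUW: "eU *v v + eW *v v = v"
proof -
  obtain u w where uw: "u \<in> U" "w \<in> W" "v = u + w" using decomp by blast
  show "eU *v v \<in> U" "eW *v v \<in> W" "eU *v v + eW *v v = v"
    using uw by (simp_all add: matrix_vector_right_distrib eU_U eU_W eW_U eW_W)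
qed

lemma matT: "mat c \<in> T"
proof (cases "c = 0")
  case True then show ?thesis using T0 by simp
next
  case False
  obtain j1 where j1: "\<forall>x\<in>U. mpow t j1 *v x = c *s x" using bU.scalar_pow[OF False] by blast
  obtain j2 where j2: "\<forall>x\<in>W. mpow t j2 *v x = c *s x" using bW.scalar_pow[OF False] by blast
  have "mat c = mpow t j1 ** eU + mpow t j2 ** eW"
  proof (rule mat_eq_UW)
    show "\<forall>x\<in>U. mat c *v x = (mpow t j1 ** eU + mpow t j2 ** eW) *v x"
      using j1 by (simp add: matrix_vector_mult_add_rdistrib matrix_vector_mul_assoc[symmetric]
          eU_U eW_U mat_vec)
    show "\<forall>x\<in>W. mat c *v x = (mpow t j1 ** eU + mpow t j2 ** eW) *v x"
      using j2 by (simp add: matrix_vector_mult_add_rdistrib matrix_vector_mul_assoc[symmetric]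
          eU_W eW_W mat_vec)
  qed
  then show ?thesis by (simp add: Tadd Tmul powT eUT eWT)
qed

end


lemma matrix_vsum_gen: "A *v (\<Sum>i\<in>S. f i) = (\<Sum>i\<in>S. A *v f i)"
  by (induction S rule: infinite_finite_induct) (auto simp: matrix_vector_right_distrib)

lemma mat_eq_axis:
  fixes A B :: "'a::field^'n^'n"
  assumes "\<And>j. A *v axis j 1 = B *v axis j 1"
  shows "A = B"
proof -
  have "A *v x = B *v x" for x
  proof -
    have "A *v x = A *v (\<Sum>i\<in>UNIV. (x$i) *s axis i 1)" by (simp add: basis_expansion)
    also have "\<dots> = (\<Sum>i\<in>UNIV. (x$i) *s (A *v axis i 1))" by (simp add: matrix_vsum_gen mvec_scale)
    also have "\<dots> = (\<Sum>i\<in>UNIV. (x$i) *s (B *v axis i 1))" by (simp add: assms)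
    also have "\<dots> = B *v (\<Sum>i\<in>UNIV. (x$i) *s axis i 1)" by (simp add: matrix_vsum_gen mvec_scale)
    also have "\<dots> = B *v x" by (simp add: basis_expansion)
    finally show ?thesis .
  qed
  then show ?thesis by (simp add: matrix_eq)
qed

lemma linear_vecI:
  fixes f :: "'a::field^'n \<Rightarrow> 'a^'n"
  assumes "\<And>x y. f (x + y) = f x + f y" "\<And>c x. f (c *s x) = c *s f x"
  shows "Vector_Spaces.linear (*s) (*s) f"
  unfolding Vector_Spaces.linear_iff using assms vec.vector_space_axioms by blast

context mctx begin

definition invsub where "invsub Y \<longleftrightarrow> vec.subspace Y \<and> (\<forall>A\<in>T. \<forall>y\<in>Y. A *v y \<in> Y)"

lemma stab_subring: "is_subring (stab_ring X)" if "vec.subspace X" for X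
  using that unfolding is_subring_def stab_ring_def
  by (auto simp: matrix_vector_mult_diff_rdistrib matrix_vector_mul_assoc[symmetric]
      vec.subspace_diff vec.subspace_0)

lemma simple:
  assumes nU: "\<not> T \<subseteq> stab_ring U" and nW: "\<not> T \<subseteq> stab_ring W" and Y: "invsub Y"
  shows "Y = {0} \<or> Y = UNIV"
proof -
  have Ys: "vec.subspace Y" and YT: "\<forall>A\<in>T. \<forall>y\<in>Y. A *v y \<in> Y" using Y by (auto simp: invsub_def)
  have Y0: "0 \<in> Y" using vec.subspace_0[OF Ys] .
  have powY: "\<forall>j. \<forall>y\<in>Y. mpow t j *v y \<in> Y" using YT powT by blast
  have eUY: "y \<in> Y \<Longrightarrow> eU *v y \<in> Y" for y using YT eUT by blast
  have eWY: "y \<in> Y \<Longrightarrow> eW *v y \<in> Y" for y using YT eWT by blast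
  consider (both) "\<exists>x\<in>Y \<inter> U. x \<noteq> 0" "\<exists>x\<in>Y \<inter> W. x \<noteq> 0"
    | (onlyU) "\<exists>x\<in>Y \<inter> U. x \<noteq> 0" "\<not> (\<exists>x\<in>Y \<inter> W. x \<noteq> 0)"
    | (onlyW) "\<not> (\<exists>x\<in>Y \<inter> U. x \<noteq> 0)" "\<exists>x\<in>Y \<inter> W. x \<noteq> 0"
    | (none) "\<not> (\<exists>x\<in>Y \<inter> U. x \<noteq> 0)" "\<not> (\<exists>x\<in>Y \<inter> W. x \<noteq> 0)" by blast
  then show ?thesis
  proof cases
    case both
    have "U \<subseteq> Y" using both(1) bU.fill[OF powY Y0] by blast
    moreover have "W \<subseteq> Y" using both(2) bW.fill[OF powY Y0] by blast
    ultimately have "Y = UNIV" using decomp vec.subspace_add[OF Ys] by (metis UNIV_eq_I subsetD)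
    then show ?thesis by simp
  next
    case onlyU
    have UY: "U \<subseteq> Y" using onlyU(1) bU.fill[OF powY Y0] by blast
    have "Y \<subseteq> U"
    proof
      fix y assume y: "y \<in> Y"
      have "eW *v y = 0" using onlyU(2) eWY[OF y] eW_in by blast
      then have "y = eU *v y" using eUW[of y] by simp
      then show "y \<in> U" using eU_in by metis
    qed
    then have "Y = U" using UY by blast
    then have "T \<subseteq> stab_ring U" using YT by (auto simp: stab_ring_def)
    then show ?thesis using nU by blast
  next
    case onlyW
    have WY: "W \<subseteq> Y" using onlyW(2) bW.fill[OF powY Y0] by blast
    have "Y \<subseteq> W"
    proof
      fix y assume y: "y \<in> Y"
      have "eU *v y = 0" using onlyW(1) eUY[OF y] eU_in by blast
      then have "y = eW *v y" using eUW[of y] by simp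
      then show "y \<in> W" using eW_in by metis
    qed
    then have "Y = W" using WY by blast
    then have "T \<subseteq> stab_ring W" using YT by (auto simp: stab_ring_def)
    then show ?thesis using nW by blast
  next
    case none
    have "Y \<subseteq> {0}"
    proof
      fix y assume y: "y \<in> Y"
      have "eU *v y = 0" using none(1) eUY[OF y] eU_in by blast
      moreover have "eW *v y = 0" using none(2) eWY[OF y] eW_in by blast
      ultimately have "y = 0" using eUW[of y] by simp
      then show "y \<in> {0}" by simp
    qed
    then show ?thesis using Y0 by blast
  qed
qed

lemma kills_span: "\<forall>b\<in>B. a *v b = 0 \<Longrightarrow> x \<in> vec.span B \<Longrightarrow> a *v x = 0"
proof -
  assume kb: "\<forall>b\<in>B. a *v b = 0" and x: "x \<in> vec.span B"
  have sub: "vec.subspace {x. a *v x = 0}"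
    unfolding vec.subspace_def by (simp add: matrix_vector_right_distrib mvec_scale)
  have "vec.span B \<subseteq> {x. a *v x = 0}" using kb by (intro vec.span_minimal[OF _ sub]) auto
  then show ?thesis using x by blast
qed

lemma dense:
  assumes simp_all: "\<forall>Y. invsub Y \<longrightarrow> Y = {0} \<or> Y = UNIV"
      and scal: "\<forall>d. (\<forall>A\<in>T. d ** A = A ** d) \<longrightarrow> (\<exists>c. d = mat c)"
  shows "finite B \<Longrightarrow> v \<notin> vec.span B \<Longrightarrow> \<exists>a\<in>T. (\<forall>b\<in>B. a *v b = 0) \<and> a *v v \<noteq> 0"
proof (induction B arbitrary: v rule: finite_induct)
  case empty
  then show ?case using idT by (intro bexI[of _ "mat 1"]) auto
next
  case (insert u B0)
  show ?case
  proof (rule ccontr)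
    assume "\<not> ?case"
    then have H: "\<And>a. a \<in> T \<Longrightarrow> \<forall>b\<in>insert u B0. a *v b = 0 \<Longrightarrow> a *v v = 0" by blast
    define J where "J = {a \<in> T. \<forall>b\<in>B0. a *v b = 0}"
    have Jadd: "a + b \<in> J" if "a \<in> J" "b \<in> J" for a b
      using that by (auto simp: J_def Tadd matrix_vector_mult_add_rdistrib)
    have Jdiff: "a - b \<in> J" if "a \<in> J" "b \<in> J" for a b
      using that by (auto simp: J_def Tdiff matrix_vector_mult_diff_rdistrib)
    have Jmul: "A ** a \<in> J" if "A \<in> T" "a \<in> J" for A a
      using that by (auto simp: J_def Tmul matrix_vector_mul_assoc[symmetric])
    have J0: "0 \<in> J" using T0 by (simp add: J_def)
    have vB0: "v \<notin> vec.span B0"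
      using insert.prems vec.span_mono[of B0 "insert u B0"] by blast
    show False
    proof (cases "u \<in> vec.span B0")
      case True
      obtain a where a: "a \<in> T" "\<forall>b\<in>B0. a *v b = 0" "a *v v \<noteq> 0" using insert.IH[OF vB0] by blast
      have "a *v u = 0" using kills_span[OF a(2) True] .
      then show False using H[OF a(1)] a by auto
    next
      case False
      obtain a1 where a1: "a1 \<in> J" "a1 *v u \<noteq> 0" using insert.IH[OF False] by (auto simp: J_def)
      define Y where "Y = (\<lambda>a. a *v u) ` J"
      have "invsub Y"
        unfolding invsub_def vec.subspace_def
      proof (intro conjI ballI allI)
        show "0 \<in> Y" using J0 by (force simp: Y_def)
        fix x y assume "x \<in> Y" "y \<in> Y"
        then obtain a b where "a \<in> J" "b \<in> J" "x = a *v u" "y = b *v u" by (auto simp: Y_def)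
        then show "x + y \<in> Y" using Jadd by (force simp: Y_def matrix_vector_mult_add_rdistrib)
      next
        fix c x assume "x \<in> Y"
        then obtain a where a: "a \<in> J" "x = a *v u" by (auto simp: Y_def)
        have "(mat c ** a) *v u = c *s (a *v u)"
          by (simp add: matrix_vector_mul_assoc[symmetric] mat_vec)
        then have "c *s x = (mat c ** a) *v u" using a by simp
        moreover have "mat c ** a \<in> J" using Jmul[OF matT a(1)] .
        ultimately show "c *s x \<in> Y" unfolding Y_def by (rule image_eqI)
      next
        fix A y assume A: "A \<in> T" and "y \<in> Y"
        then obtain a where a: "a \<in> J" "y = a *v u" by (auto simp: Y_def)
        then have "A *v y = (A ** a) *v u" by (simp add: matrix_vector_mul_assoc)
        then show "A *v y \<in> Y" using Jmul[OF A a(1)] by (auto simp: Y_def)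
      qed
      have Yne: "Y \<noteq> {0}" using a1 by (auto simp: Y_def)
      have YU: "Y = UNIV" using simp_all \<open>invsub Y\<close> Yne by blast
      have ex: "\<exists>a. a \<in> J \<and> a *v u = x" for x
      proof -
        have "x \<in> Y" using YU by simp
        then show ?thesis by (auto simp: Y_def)
      qed
      define \<phi> where "\<phi> x = (SOME a. a \<in> J \<and> a *v u = x) *v v" for x
      have phi: "\<phi> x = a *v v" if a: "a \<in> J" "a *v u = x" for a x
      proof -
        define a' where "a' = (SOME a. a \<in> J \<and> a *v u = x)"
        have a': "a' \<in> J \<and> a' *v u = x" unfolding a'_def by (rule someI_ex) (rule ex)
        have d: "a' - a \<in> J" using Jdiff a' a(1) by blast
        have "(a' - a) *v u = 0" using a' a(2) by (simp add: matrix_vector_mult_diff_rdistrib)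
        then have "\<forall>b\<in>insert u B0. (a' - a) *v b = 0" using d by (auto simp: J_def)
        then have "(a' - a) *v v = 0" using H d by (auto simp: J_def)
        then show ?thesis by (simp add: \<phi>_def a'_def[symmetric] matrix_vector_mult_diff_rdistrib)
      qed
      have lin: "Vector_Spaces.linear (*s) (*s) \<phi>"
      proof (rule linear_vecI)
        fix x y
        obtain a b where a: "a \<in> J" "a *v u = x" and b: "b \<in> J" "b *v u = y" using ex by blast
        have "\<phi> (x + y) = (a + b) *v v"
          using Jadd[OF a(1) b(1)] a b by (intro phi) (auto simp: matrix_vector_mult_add_rdistrib)
        then show "\<phi> (x + y) = \<phi> x + \<phi> y" using phi a b by (simp add: matrix_vector_mult_add_rdistrib)
      next
        fix c x
        obtain a where a: "a \<in> J" "a *v u = x" using ex by blast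
        have "\<phi> (c *s x) = (mat c ** a) *v v"
          using Jmul[OF matT a(1)] a by (intro phi) (auto simp: matrix_vector_mul_assoc[symmetric] mat_vec)
        then show "\<phi> (c *s x) = c *s \<phi> x" using phi a by (simp add: matrix_vector_mul_assoc[symmetric] mat_vec)
      qed
      define \<Phi> where "\<Phi> = matrix \<phi>"
      have Phi: "\<Phi> *v x = \<phi> x" for x unfolding \<Phi>_def by (rule matrix_works[OF lin])
      have comm: "\<forall>A\<in>T. \<Phi> ** A = A ** \<Phi>"
      proof
        fix A assume A: "A \<in> T"
        have "(\<Phi> ** A) *v x = (A ** \<Phi>) *v x" for x
        proof -
          obtain a where a: "a \<in> J" "a *v u = x" using ex by blast
          have "\<phi> (A *v x) = (A ** a) *v v"
            using Jmul[OF A a(1)] a by (intro phi) (auto simp: matrix_vector_mul_assoc)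
          then show ?thesis using phi[OF a]
            by (simp add: matrix_vector_mul_assoc[symmetric] Phi)
        qed
        then show "\<Phi> ** A = A ** \<Phi>" by (simp add: matrix_eq)
      qed
      obtain c where c: "\<Phi> = mat c" using scal comm by blast
      have kill: "a *v (v - c *s u) = 0" if a: "a \<in> J" for a
      proof -
        have "a *v v = \<phi> (a *v u)" using phi[OF a] by simp
        also have "\<dots> = c *s (a *v u)" using Phi[of "a *v u"] c by (simp add: mat_vec)
        finally show ?thesis by (simp add: matrix_vector_mult_diff_distrib mvec_scale)
      qed
      have "v - c *s u \<in> vec.span B0"
      proof (rule ccontr)
        assume "v - c *s u \<notin> vec.span B0"
        then obtain a where "a \<in> T" "\<forall>b\<in>B0. a *v b = 0" "a *v (v - c *s u) \<noteq> 0"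
          using insert.IH by blast
        then show False using kill by (auto simp: J_def)
      qed
      then have "v \<in> vec.span (insert u B0)" using vec.span_breakdown_eq by blast
      then show False using insert.prems by blast
    qed
  qed
qed

end


context mctx begin

lemma T_univ_contra:
  assumes simp_all: "\<forall>Y. invsub Y \<longrightarrow> Y = {0} \<or> Y = UNIV"
      and scal: "\<forall>d. (\<forall>A\<in>T. d ** A = A ** d) \<longrightarrow> (\<exists>c. d = mat c)"
  shows False
proof -
  have "\<forall>i. \<exists>a. a \<in> T \<and> (\<forall>j. j \<noteq> i \<longrightarrow> a *v axis j 1 = 0) \<and> a *v axis i 1 \<noteq> 0"
  proof
    fix i :: 'n
    define B where "B = (\<lambda>j. axis j (1::'a)) ` (UNIV - {i})"
    have fB: "finite B" by (simp add: B_def)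
    have sub: "vec.subspace {x::'a^'n. x $ i = 0}" unfolding vec.subspace_def by simp
    have "vec.span B \<subseteq> {x. x $ i = 0}"
      by (rule vec.span_minimal[OF _ sub]) (auto simp: B_def axis_def)
    then have "axis i 1 \<notin> vec.span B" by auto
    then obtain a where "a \<in> T" "\<forall>b\<in>B. a *v b = 0" "a *v axis i 1 \<noteq> 0"
      using dense[OF simp_all scal fB] by blast
    then show "\<exists>a. a \<in> T \<and> (\<forall>j. j \<noteq> i \<longrightarrow> a *v axis j 1 = 0) \<and> a *v axis i 1 \<noteq> 0"
      by (auto simp: B_def)
  qed
  then obtain a where a: "\<And>i. a i \<in> T" "\<And>i j. j \<noteq> i \<Longrightarrow> a i *v axis j 1 = 0" "\<And>i. a i *v axis i 1 \<noteq> 0"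
    by metis
  have "M \<in> T" for M
  proof -
    have "\<forall>i. \<exists>b. b \<in> T \<and> b *v (a i *v axis i 1) = M *v axis i 1"
    proof
      fix i
      define w where "w = a i *v axis i 1"
      define Y where "Y = (\<lambda>A. A *v w) ` T"
      have "invsub Y"
        unfolding invsub_def vec.subspace_def
      proof (intro conjI ballI allI)
        show "0 \<in> Y" using T0 by (force simp: Y_def)
        fix x y assume "x \<in> Y" "y \<in> Y"
        then obtain A B where AB: "A \<in> T" "B \<in> T" "x = A *v w" "y = B *v w" by (auto simp: Y_def)
        then have "x + y = (A + B) *v w" by (simp add: matrix_vector_mult_add_rdistrib)
        then show "x + y \<in> Y" unfolding Y_def using Tadd[OF AB(1,2)] by (rule image_eqI)
      next
        fix c x assume "x \<in> Y"
        then obtain A where A: "A \<in> T" "x = A *v w" by (auto simp: Y_def)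
        then have "c *s x = (mat c ** A) *v w" by (simp add: matrix_vector_mul_assoc[symmetric] mat_vec)
        then show "c *s x \<in> Y" unfolding Y_def using Tmul[OF matT A(1)] by (rule image_eqI)
      next
        fix A y assume A: "A \<in> T" and "y \<in> Y"
        then obtain B where B: "B \<in> T" "y = B *v w" by (auto simp: Y_def)
        then have "A *v y = (A ** B) *v w" by (simp add: matrix_vector_mul_assoc)
        then show "A *v y \<in> Y" unfolding Y_def using Tmul[OF A B(1)] by (rule image_eqI)
      qed
      moreover have "w \<in> Y" using idT by (force simp: Y_def)
      moreover have "w \<noteq> 0" using a(3) by (simp add: w_def)
      ultimately have "Y = UNIV" using simp_all by blast
      then have "M *v axis i 1 \<in> Y" by simp
      then show "\<exists>b. b \<in> T \<and> b *v (a i *v axis i 1) = M *v axis i 1" by (auto simp: Y_def w_def)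
    qed
    then obtain b where b: "\<And>i. b i \<in> T" "\<And>i. b i *v (a i *v axis i 1) = M *v axis i 1" by metis
    define S where "S = (\<Sum>i\<in>UNIV. b i ** a i)"
    have ST: "S \<in> T" unfolding S_def using b(1) a(1) by (intro Tsum Tmul)
    have "S *v axis j 1 = M *v axis j 1" for j
    proof -
      have t: "(b i ** a i) *v axis j 1 = (if i = j then M *v axis j 1 else 0)" for i
        using a(2)[of j i] b(2)[of i] by (auto simp: matrix_vector_mul_assoc[symmetric])
      show ?thesis unfolding S_def matrix_sum_vec t by simp
    qed
    then have "S = M" by (rule mat_eq_axis)
    then show ?thesis using ST by simp
  qed
  then show False using Tne by auto
qed

lemma exists_nonscalar:
  assumes nU: "\<not> T \<subseteq> stab_ring U" and nW: "\<not> T \<subseteq> stab_ring W"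
  shows "\<exists>d. (\<forall>A\<in>T. d ** A = A ** d) \<and> (\<forall>c. d \<noteq> mat c)"
  using T_univ_contra simple[OF nU nW] by blast

end


definition Emat :: "'n \<Rightarrow> 'n \<Rightarrow> 'a::field^'n^'n" where
  "Emat i j = (\<chi> r s. if r = i \<and> s = j then 1 else 0)"

lemma Emat_left: "(Emat i j ** x) $ r $ s = (if r = i then x $ j $ s else 0)"
  by (simp add: Emat_def matrix_matrix_mult_def if_distrib if_distribR sum.delta cong: if_cong)

lemma Emat_right: "(x ** Emat i j) $ r $ s = (if s = j then x $ r $ i else 0)"
  by (simp add: Emat_def matrix_matrix_mult_def if_distrib if_distribR sum.delta' cong: if_cong)

lemma center_scalar:
  fixes x :: "'a::field^'n^'n"
  assumes "\<forall>A. A ** x = x ** A"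
  shows "\<exists>c. x = mat c"
proof -
  obtain i0 :: 'n where True by blast
  have e: "(Emat i j ** x) $ r $ s = (x ** Emat i j) $ r $ s" for i j r s using assms by simp
  have diag: "x $ j $ j = x $ i $ i" for i j
    using e[of i j i j] by (simp add: Emat_left Emat_right)
  have off: "x $ r $ i = 0" if "r \<noteq> i" for r i
    using e[of i i r i] that by (simp add: Emat_left Emat_right)
  have "x = mat (x $ i0 $ i0)"
    unfolding mat_def vec_eq_iff using diag off by auto
  then show ?thesis by blast
qed

lemma pow_on:
  assumes inv: "\<forall>j. \<forall>x\<in>X. mpow t j *v x \<in> X" and d: "\<forall>x\<in>X. d *v x = mpow t j *v x"
  shows "\<forall>x\<in>X. mpow d i *v x = mpow t (j * i) *v x"
proof (induction i)
  case (Suc i)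
  show ?case
  proof
    fix x assume x: "x \<in> X"
    have "mpow d (Suc i) *v x = d *v (mpow t (j * i) *v x)"
      using Suc x by (simp add: matrix_vector_mul_assoc[symmetric])
    also have "\<dots> = mpow t j *v (mpow t (j * i) *v x)" using d inv x by blast
    also have "\<dots> = mpow t (j * Suc i) *v x" by (simp add: matrix_vector_mul_assoc mpow_add[symmetric])
    finally show "mpow d (Suc i) *v x = mpow t (j * Suc i) *v x" .
  qed
qed simp

lemma mod_add_dvd: "(a + b) mod (P::nat) = a mod P \<Longrightarrow> P dvd b"
  by (metis add_diff_cancel_left' le_add1 mod_eq_dvd_iff_nat)

locale mctx2 = mctx +
  assumes nU: "\<not> T \<subseteq> stab_ring U" and nW: "\<not> T \<subseteq> stab_ring W"
begin

definition D where "D = {d. \<forall>A\<in>T. d ** A = A ** d}"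

lemma DT: "d \<in> D \<Longrightarrow> A \<in> T \<Longrightarrow> d ** A = A ** d" by (simp add: D_def)

lemma Dadd: "d \<in> D \<Longrightarrow> e \<in> D \<Longrightarrow> d + e \<in> D"
  by (simp add: D_def matrix_add_ldistrib matrix_add_rdistrib_gen)
lemma Ddiff: "d \<in> D \<Longrightarrow> e \<in> D \<Longrightarrow> d - e \<in> D"
  by (simp add: D_def matrix_diff_ldistrib matrix_diff_rdistrib)
lemma Dmul: "d \<in> D \<Longrightarrow> e \<in> D \<Longrightarrow> d ** e \<in> D"
  by (simp add: D_def matrix_mul_assoc) (metis matrix_mul_assoc)
lemma Dmat: "mat c \<in> D"
  by (simp add: D_def mat_commute)
lemma Dpow: "d \<in> D \<Longrightarrow> mpow d j \<in> D"
  by (induction j) (simp_all add: Dmat Dmul)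

lemma schur: "d \<in> D \<Longrightarrow> d \<noteq> 0 \<Longrightarrow> d *v x = 0 \<Longrightarrow> x = 0"
proof -
  assume d: "d \<in> D" "d \<noteq> 0" and x: "d *v x = 0"
  define Y where "Y = {x. d *v x = 0}"
  have "invsub Y"
    unfolding invsub_def vec.subspace_def Y_def
  proof (intro conjI ballI allI)
    fix A y assume A: "A \<in> T" and "y \<in> {x. d *v x = 0}"
    have "d *v (A *v y) = (d ** A) *v y" by (simp add: matrix_vector_mul_assoc)
    also have "\<dots> = (A ** d) *v y" using DT[OF d(1) A] by simp
    also have "\<dots> = A *v (d *v y)" by (simp add: matrix_vector_mul_assoc)
    finally have "d *v (A *v y) = A *v (d *v y)" .
    then show "A *v y \<in> {x. d *v x = 0}" using \<open>y \<in> _\<close> by simp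
  qed (auto simp: matrix_vector_right_distrib mvec_scale)
  then have "Y = {0} \<or> Y = UNIV" using simple[OF nU nW] by blast
  moreover have "Y \<noteq> UNIV"
  proof
    assume "Y = UNIV"
    then have "d = 0" by (auto simp: Y_def matrix_eq)
    then show False using d by simp
  qed
  ultimately show "x = 0" using x by (auto simp: Y_def)
qed

lemma DU: "d \<in> D \<Longrightarrow> x \<in> U \<Longrightarrow> d *v x \<in> U"
proof -
  assume d: "d \<in> D" and x: "x \<in> U"
  have "d *v x = d *v (eU *v x)" using eU_U[OF x] by simp
  also have "\<dots> = eU *v (d *v x)" using DT[OF d eUT] by (simp add: matrix_vector_mul_assoc)
  finally show ?thesis using eU_in by metis
qed

lemma DW: "d \<in> D \<Longrightarrow> x \<in> W \<Longrightarrow> d *v x \<in> W"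
proof -
  assume d: "d \<in> D" and x: "x \<in> W"
  have "d *v x = d *v (eW *v x)" using eW_W[OF x] by simp
  also have "\<dots> = eW *v (d *v x)" using DT[OF d eWT] by (simp add: matrix_vector_mul_assoc)
  finally show ?thesis using eW_in by metis
qed

definition u0 where "u0 = (SOME x. x \<in> U \<and> x \<noteq> 0)"
definition w0 where "w0 = (SOME x. x \<in> W \<and> x \<noteq> 0)"

lemma u0: "u0 \<in> U" "u0 \<noteq> 0"
  using someI_ex[of "\<lambda>x. x \<in> U \<and> x \<noteq> 0"] bU.exists_nonzero by (auto simp: u0_def)
lemma w0: "w0 \<in> W" "w0 \<noteq> 0"
  using someI_ex[of "\<lambda>x. x \<in> W \<and> x \<noteq> 0"] bW.exists_nonzero by (auto simp: w0_def)

lemma Dform_gen: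
  assumes X: "X = U \<or> X = W" and d: "d \<in> D" "d \<noteq> 0"
  shows "\<exists>j. \<forall>x\<in>X. d *v x = mpow t j *v x"
proof -
  interpret bX: sblock t X using X bU.sblock_axioms bW.sblock_axioms by auto
  have DX: "d *v x \<in> X" if "x \<in> X" for x using X DU DW d that by auto
  obtain x0 where x0: "x0 \<in> X" "x0 \<noteq> 0" using bX.exists_nonzero by blast
  have dx0: "d *v x0 \<in> X" "d *v x0 \<noteq> 0" using DX x0 schur[OF d] by auto
  obtain j where j: "mpow t j *v x0 = d *v x0" using bX.transit[OF x0(1) dx0(1) x0(2) dx0(2)] by blast
  have "\<forall>x\<in>X. d *v x = mpow t j *v x"
  proof
    fix x assume x: "x \<in> X"
    show "d *v x = mpow t j *v x"
    proof (cases "x = 0")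
      case False
      obtain i where i: "mpow t i *v x0 = x" using bX.transit[OF x0(1) x x0(2) False] by blast
      have "d *v x = (d ** mpow t i) *v x0" by (simp add: i[symmetric] matrix_vector_mul_assoc)
      also have "\<dots> = mpow t i *v (d *v x0)" using DT[OF d(1) powT] by (simp add: matrix_vector_mul_assoc)
      also have "\<dots> = (mpow t i ** mpow t j) *v x0" by (simp add: j[symmetric] matrix_vector_mul_assoc)
      also have "\<dots> = mpow t j *v x" by (simp add: mpow_comm i[symmetric] matrix_vector_mul_assoc)
      finally show ?thesis .
    qed simp
  qed
  then show ?thesis by blast
qed

lemma DformU: "d \<in> D \<Longrightarrow> d \<noteq> 0 \<Longrightarrow> \<exists>j. \<forall>x\<in>U. d *v x = mpow t j *v x"
  using Dform_gen by blast
lemma DformW: "d \<in> D \<Longrightarrow> d \<noteq> 0 \<Longrightarrow> \<exists>j. \<forall>x\<in>W. d *v x = mpow t j *v x"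
  using Dform_gen by blast

lemma D_eqU: "d \<in> D \<Longrightarrow> e \<in> D \<Longrightarrow> \<forall>x\<in>U. d *v x = e *v x \<Longrightarrow> d = e"
proof (rule ccontr)
  assume a: "d \<in> D" "e \<in> D" "\<forall>x\<in>U. d *v x = e *v x" "d \<noteq> e"
  have "(d - e) *v u0 = 0" using a u0 by (simp add: matrix_vector_mult_diff_rdistrib)
  then show False using schur[OF Ddiff[OF a(1,2)]] a(4) u0 by simp
qed

lemma D_eqW: "d \<in> D \<Longrightarrow> e \<in> D \<Longrightarrow> \<forall>x\<in>W. d *v x = e *v x \<Longrightarrow> d = e"
proof (rule ccontr)
  assume a: "d \<in> D" "e \<in> D" "\<forall>x\<in>W. d *v x = e *v x" "d \<noteq> e"
  have "(d - e) *v w0 = 0" using a w0 by (simp add: matrix_vector_mult_diff_rdistrib)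
  then show False using schur[OF Ddiff[OF a(1,2)]] a(4) w0 by simp
qed

lemma Dcomm: "d \<in> D \<Longrightarrow> e \<in> D \<Longrightarrow> d ** e = e ** d"
proof -
  assume d: "d \<in> D" and e: "e \<in> D"
  show ?thesis
  proof (cases "d = 0 \<or> e = 0")
    case True then show ?thesis by auto
  next
    case False
    obtain i where i: "\<forall>x\<in>U. d *v x = mpow t i *v x" using DformU d False by blast
    obtain j where j: "\<forall>x\<in>U. e *v x = mpow t j *v x" using DformU e False by blast
    show ?thesis
    proof (rule D_eqU[OF Dmul[OF d e] Dmul[OF e d]], intro ballI)
      fix x assume x: "x \<in> U"
      have "(d ** e) *v x = mpow t i *v (mpow t j *v x)"
        using i j x bU.powX by (simp add: matrix_vector_mul_assoc[symmetric])
      also have "\<dots> = mpow t j *v (mpow t i *v x)" by (simp add: matrix_vector_mul_assoc mpow_comm)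
      also have "\<dots> = (e ** d) *v x"
        using i j x bU.powX by (simp add: matrix_vector_mul_assoc[symmetric])
      finally show "(d ** e) *v x = (e ** d) *v x" .
    qed
  qed
qed

end


lemma mat1_ne0: "(mat 1 :: 'a::field^'n^'n) \<noteq> 0"
proof
  assume "(mat 1 :: 'a^'n^'n) = 0"
  then have "(mat 1 :: 'a^'n^'n) $ i $ i = 0" for i :: 'n by simp
  then show False by (simp add: mat_def)
qed

context mctx2 begin

definition Es where "Es = {j. 0 < j \<and> (\<exists>d\<in>D. \<forall>x\<in>U. d *v x = mpow t j *v x)}"
definition s where "s = (LEAST j. j \<in> Es)"

lemma N1_Es: "N1 \<in> Es"
  unfolding Es_def using N12(1) Dmat[of 1] bU.Nid by (auto intro!: bexI[of _ "mat 1"])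

lemma s_Es: "s \<in> Es" unfolding s_def by (rule LeastI[of "\<lambda>j. j \<in> Es", OF N1_Es])
lemma s_min: "j \<in> Es \<Longrightarrow> s \<le> j" unfolding s_def by (rule Least_le)
lemma s_pos: "0 < s" using s_Es by (simp add: Es_def)

definition g where "g = (SOME d. d \<in> D \<and> (\<forall>x\<in>U. d *v x = mpow t s *v x))"

lemma g: "g \<in> D" "\<forall>x\<in>U. g *v x = mpow t s *v x"
proof -
  have "\<exists>d. d \<in> D \<and> (\<forall>x\<in>U. d *v x = mpow t s *v x)" using s_Es by (auto simp: Es_def)
  from someI_ex[OF this] show "g \<in> D" "\<forall>x\<in>U. g *v x = mpow t s *v x" by (auto simp: g_def)
qed

lemma g_pow_U: "\<forall>x\<in>U. mpow g i *v x = mpow t (s * i) *v x"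
  using pow_on[of U t g s i] bU.powX g(2) by blast

lemma D_gen: "d \<in> D \<Longrightarrow> d \<noteq> 0 \<Longrightarrow> \<exists>i. d = mpow g i"
proof -
  assume d: "d \<in> D" "d \<noteq> 0"
  obtain j where j: "\<forall>x\<in>U. d *v x = mpow t j *v x" using DformU[OF d] by blast
  define r where "r = j mod s"
  define i where "i = j div s"
  have jr: "j = s * i + r" by (simp add: r_def i_def)
  have r0: "r = 0"
  proof (rule ccontr)
    assume rne: "r \<noteq> 0"
    obtain M where M: "N1 = Suc M" using N12(1) by (cases N1) auto
    define d' where "d' = d ** mpow g (i * M)"
    have d'D: "d' \<in> D" unfolding d'_def by (intro Dmul d(1) Dpow g(1))
    have ar: "j + s * (i * M) = r + N1 * (s * i)" using jr M by (simp add: algebra_simps)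
    have "\<forall>x\<in>U. d' *v x = mpow t r *v x"
    proof
      fix x assume x: "x \<in> U"
      have "d' *v x = d *v (mpow t (s * (i * M)) *v x)"
        using g_pow_U x by (simp add: d'_def matrix_vector_mul_assoc[symmetric])
      also have "\<dots> = mpow t j *v (mpow t (s * (i * M)) *v x)" using j bU.powX x by blast
      also have "\<dots> = mpow t (j + s * (i * M)) *v x" by (simp add: matrix_vector_mul_assoc mpow_add)
      also have "\<dots> = mpow t r *v (mpow t (N1 * (s * i)) *v x)"
        unfolding ar by (simp add: matrix_vector_mul_assoc mpow_add)
      also have "\<dots> = mpow t r *v x" using bU.Nmult[OF x] by simp
      finally show "d' *v x = mpow t r *v x" .
    qed
    then have "r \<in> Es" using d'D rne by (auto simp: Es_def)
    then have "s \<le> r" by (rule s_min)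
    moreover have "r < s" using s_pos by (simp add: r_def)
    ultimately show False by simp
  qed
  have "d = mpow g i"
  proof (rule D_eqU[OF d(1) Dpow[OF g(1)]], intro ballI)
    fix x assume "x \<in> U"
    then show "d *v x = mpow g i *v x" using j g_pow_U jr r0 by simp
  qed
  then show ?thesis by blast
qed

lemma g_N1: "mpow g N1 = mat 1"
proof (rule D_eqU[OF Dpow[OF g(1)] Dmat], intro ballI)
  fix x assume x: "x \<in> U"
  have "mpow g N1 *v x = mpow t (N1 * s) *v x" using g_pow_U x by (simp add: mult.commute)
  then show "mpow g N1 *v x = mat 1 *v x" using bU.Nmult[OF x] by simp
qed

definition P where "P = (LEAST p. 0 < p \<and> mpow g p = mat 1)"

lemma P: "0 < P" "mpow g P = mat 1"
proof -
  have "0 < N1 \<and> mpow g N1 = mat 1" using N12(1) g_N1 by simp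
  from LeastI[of "\<lambda>p. 0 < p \<and> mpow g p = mat 1", OF this]
  show "0 < P" "mpow g P = mat 1" by (auto simp: P_def)
qed

lemma P_min: "0 < p \<Longrightarrow> mpow g p = mat 1 \<Longrightarrow> P \<le> p"
  unfolding P_def by (rule Least_le) simp

lemma gP_mult: "mpow g (P * c) = mat 1"
  by (simp add: mpow_mult P mpow_mat)

lemma g_mod: "mpow g a = mpow g (a mod P)"
proof -
  have "a = a mod P + P * (a div P)" by simp
  then have "mpow g a = mpow g (a mod P) ** mpow g (P * (a div P))" by (metis mpow_add)
  then show ?thesis by (simp add: gP_mult)
qed

lemma g_inv: "a < P \<Longrightarrow> mpow g a ** mpow g (P - a) = mat 1"
  by (simp add: mpow_add[symmetric] P)

lemma g_eq_aux: "a < P \<Longrightarrow> b < P \<Longrightarrow> a \<le> b \<Longrightarrow> mpow g a = mpow g b \<Longrightarrow> a = b"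
proof (rule ccontr)
  assume ab: "a < P" "b < P" "a \<le> b" "mpow g a = mpow g b" "a \<noteq> b"
  have "mpow g (b - a) = mpow g (b - a) ** (mpow g a ** mpow g (P - a))" using g_inv[OF ab(1)] by simp
  also have "\<dots> = mpow g b ** mpow g (P - a)"
    using ab(3) by (simp add: matrix_mul_assoc mpow_add[symmetric])
  also have "\<dots> = mat 1" using ab(4) g_inv[OF ab(1)] by simp
  finally have "mpow g (b - a) = mat 1" .
  then have "P \<le> b - a" using ab by (intro P_min) auto
  then show False using ab by simp
qed

lemma g_eq: "mpow g a = mpow g b \<longleftrightarrow> a mod P = b mod P"
proof
  assume "mpow g a = mpow g b"
  then have e: "mpow g (a mod P) = mpow g (b mod P)" by (metis g_mod)
  have lt: "a mod P < P" "b mod P < P" using P(1) by simp_all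
  show "a mod P = b mod P"
  proof (cases "a mod P \<le> b mod P")
    case True then show ?thesis using g_eq_aux[OF lt True e] by simp
  next
    case False then show ?thesis using g_eq_aux[OF lt(2,1) _ e[symmetric]] by simp
  qed
next
  assume "a mod P = b mod P"
  then show "mpow g a = mpow g b" by (metis g_mod)
qed

lemma g_ne0: "mpow g i \<noteq> 0"
proof
  assume z: "mpow g i = 0"
  have "mpow g (i mod P) ** mpow g (P - i mod P) = mat 1" using g_inv P(1) by simp
  then have "mpow g 0 = 0" using z g_mod[of i] by simp
  then have "mpow g 0 *v u0 = 0" by simp
  then show False using u0 by simp
qed

lemma D_nonzero: "D - {0} = (\<lambda>i. mpow g i) ` {..<P}"
proof
  show "D - {0} \<subseteq> (\<lambda>i. mpow g i) ` {..<P}"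
  proof
    fix d assume "d \<in> D - {0}"
    then obtain i where "d = mpow g i" using D_gen by blast
    then have "d = mpow g (i mod P)" using g_mod by simp
    moreover have "i mod P < P" using P(1) by simp
    ultimately show "d \<in> (\<lambda>i. mpow g i) ` {..<P}" by blast
  qed
  show "(\<lambda>i. mpow g i) ` {..<P} \<subseteq> D - {0}" using Dpow[OF g(1)] g_ne0 by auto
qed

lemma inj_g: "inj_on (\<lambda>i. mpow g i) {..<P}"
  by (rule inj_onI) (simp add: g_eq)

lemma cardD: "card D = P + 1"
proof -
  have "0 \<in> D" by (simp add: D_def)
  have "card (D - {0}) = P" using D_nonzero card_image[OF inj_g] by simp
  moreover have "finite D" by simp
  ultimately show ?thesis using \<open>0 \<in> D\<close> by (metis card_Diff_singleton add.commute plus_1_eq_Suc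
        card_gt_0_iff diff_Suc_1 Suc_pred empty_iff)
qed

end


lemma inj_mat: "inj (mat :: 'a::field \<Rightarrow> 'a^'n^'n)"
proof (rule injI)
  fix a b :: 'a assume "(mat a :: 'a^'n^'n) = mat b"
  then have "(mat a :: 'a^'n^'n) $ i $ i = mat b $ i $ i" for i :: 'n by simp
  then show "a = b" by (simp add: mat_def)
qed

context mctx2 begin

lemma cardD_pow: "\<exists>m. card D = CARD('a) ^ m \<and> m \<ge> 2"
proof -
  define Du where "Du = (\<lambda>d. d *v u0) ` D"
  have inj: "inj_on (\<lambda>d. d *v u0) D"
  proof (rule inj_onI)
    fix d e assume de: "d \<in> D" "e \<in> D" "d *v u0 = e *v u0"
    show "d = e"
    proof (rule ccontr)
      assume "d \<noteq> e"
      then have "d - e \<noteq> 0" by simp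
      moreover have "(d - e) *v u0 = 0" using de by (simp add: matrix_vector_mult_diff_rdistrib)
      ultimately show False using schur[OF Ddiff[OF de(1,2)]] u0 by blast
    qed
  qed
  have sub: "vec.subspace Du"
    unfolding vec.subspace_def Du_def
  proof (intro conjI ballI allI)
    show "0 \<in> (\<lambda>d. d *v u0) ` D" by (rule image_eqI[of _ _ 0]) (auto simp: D_def)
  next
    fix x y assume "x \<in> (\<lambda>d. d *v u0) ` D" "y \<in> (\<lambda>d. d *v u0) ` D"
    then obtain d e where "d \<in> D" "e \<in> D" "x = d *v u0" "y = e *v u0" by blast
    then show "x + y \<in> (\<lambda>d. d *v u0) ` D"
      by (intro image_eqI[of _ _ "d + e"]) (auto simp: Dadd matrix_vector_mult_add_rdistrib)
  next
    fix c x assume "x \<in> (\<lambda>d. d *v u0) ` D"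
    then obtain d where "d \<in> D" "x = d *v u0" by blast
    then show "c *s x \<in> (\<lambda>d. d *v u0) ` D"
      by (intro image_eqI[of _ _ "mat c ** d"])
         (auto simp: Dmul Dmat matrix_vector_mul_assoc[symmetric] mat_vec)
  qed
  define m where "m = vec.dim Du"
  have cD: "card D = CARD('a) ^ m"
    using card_subspace[OF sub] card_image[OF inj] by (simp add: Du_def m_def)
  obtain d0 where d0: "\<forall>A\<in>T. d0 ** A = A ** d0" "\<forall>c. d0 \<noteq> mat c"
    using exists_nonscalar[OF nU nW] by blast
  have sub2: "insert d0 (range mat) \<subseteq> D" using d0 Dmat by (auto simp: D_def)
  have "card (insert d0 (range mat)) = CARD('a) + 1"
  proof -
    have "card (range (mat :: 'a \<Rightarrow> 'a^'b^'b)) = CARD('a)"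
      using card_image[OF inj_mat] by simp
    moreover have "d0 \<notin> range mat" using d0(2) by auto
    ultimately show ?thesis by simp
  qed
  then have "CARD('a) + 1 \<le> card D" using card_mono[OF _ sub2] by simp
  then have "CARD('a) + 1 \<le> CARD('a) ^ m" using cD by simp
  moreover have "m \<le> 1 \<Longrightarrow> CARD('a) ^ m \<le> CARD('a)"
    using card_ge2_fin[where 'a='a] by (cases m) auto
  ultimately have "m \<ge> 2" by fastforce
  then show ?thesis using cD by blast
qed

lemma P_dvd_N1: "P dvd N1"
proof -
  have "N1 mod P = 0 mod P" using g_eq[of N1 0] g_N1 by simp
  then have "N1 mod P = 0" by simp
  then show ?thesis by (simp add: mod_eq_0_iff_dvd)
qed

lemma g_ne: "g \<noteq> 0" using g_ne0[of 1] by simp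

lemma P_dvd_N2: "P dvd N2"
proof -
  obtain j where j: "\<forall>x\<in>W. g *v x = mpow t j *v x" using DformW[OF g(1) g_ne] by blast
  have pw: "\<forall>x\<in>W. mpow g N2 *v x = mpow t (j * N2) *v x"
    using pow_on[of W t g j N2] bW.powX j by blast
  have "mpow g N2 = mat 1"
  proof (rule D_eqW[OF Dpow[OF g(1)] Dmat], intro ballI)
    fix x assume x: "x \<in> W"
    have "mpow g N2 *v x = mpow t (N2 * j) *v x" using pw x by (simp add: mult.commute)
    then show "mpow g N2 *v x = mat 1 *v x" using bW.Nmult[OF x] by simp
  qed
  then have "N2 mod P = 0 mod P" using g_eq[of N2 0] by simp
  then have "N2 mod P = 0" by simp
  then show ?thesis by (simp add: mod_eq_0_iff_dvd)
qed

lemma D_peval: "d \<in> D \<Longrightarrow> \<exists>p. d = peval p g"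
proof -
  assume d: "d \<in> D"
  show ?thesis
  proof (cases "d = 0")
    case True then show ?thesis by (intro exI[of _ 0]) simp
  next
    case False
    then obtain i where "d = mpow g i" using D_gen d by blast
    then show ?thesis by (intro exI[of _ "monom 1 i"]) (simp add: peval_monom1)
  qed
qed

end


context mctx2 begin

lemma main_typeII: "\<exists>l. prime l \<and> l dvd k \<and> typeII T l"
proof -
  let ?q = "CARD('a)"
  have q2: "?q \<ge> 2" by (rule card_ge2_fin)
  obtain m where m: "card D = ?q ^ m" "m \<ge> 2" using cardD_pow by blast
  have Pm: "P = ?q ^ m - 1" using m cardD by simp
  have "(?q ^ m - 1) dvd (?q ^ k - 1)" using P_dvd_N1 unfolding Pm N1_def' .
  then have mk: "m dvd k" by (rule pow_minus1_dvd_rev[OF q2])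
  have "(?q ^ m - 1) dvd (?q ^ vec.dim W - 1)" using P_dvd_N2 unfolding Pm bW.N_def .
  then have mW: "m dvd vec.dim W" by (rule pow_minus1_dvd_rev[OF q2])
  obtain l where l: "prime l" "l dvd m" using prime_factor_nat[of m] m(2) by auto
  have lk: "l dvd k" "l dvd vec.dim W" using l(2) mk mW dvd_trans by blast+
  have l2: "l \<ge> 2" using l(1) prime_ge_2_nat by blast
  define L where "L = ?q ^ l"
  have "?q ^ 2 \<le> ?q ^ l" using q2 l2 by (intro power_increasing) auto
  moreover have "(4::nat) \<le> ?q ^ 2" using q2 power_mono[OF q2, of 2] by simp
  ultimately have L4: "L \<ge> 4" unfolding L_def by linarith
  have qL: "?q < L"
  proof -
    have "?q ^ 1 < ?q ^ l" using q2 l2 by (intro power_strict_increasing) auto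
    then show ?thesis by (simp add: L_def)
  qed
  have Ldvd: "(L - 1) dvd P"
  proof -
    obtain c where "m = l * c" using l(2) by blast
    then show ?thesis using pow_minus1_dvd[of ?q l c] q2 by (simp add: Pm L_def)
  qed
  define c' where "c' = P div (L - 1)"
  have Pc: "P = c' * (L - 1)" using Ldvd by (simp add: c'_def)
  have c'pos: "c' > 0" using P(1) Pc by (cases c') auto
  define K where "K = {x \<in> D. mpow x L = x}"
  have KD: "K \<subseteq> D" by (auto simp: K_def)
  have frob: "mpow (peval p g) L = peval p (mpow g L)" for p
    unfolding L_def by (rule mpow_peval_frob)
  have Kdiff: "x - y \<in> K" if "x \<in> K" "y \<in> K" for x y
  proof -
    have xy: "x \<in> D" "y \<in> D" "mpow x L = x" "mpow y L = y" using that by (auto simp: K_def)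
    obtain px py where p: "x = peval px g" "y = peval py g" using D_peval xy(1,2) by metis
    have "mpow (x - y) L = peval (px - py) (mpow g L)"
      using frob[of "px - py"] by (simp add: p peval_diff)
    also have "\<dots> = mpow x L - mpow y L" by (simp add: peval_diff p frob)
    finally show ?thesis using xy Ddiff by (simp add: K_def)
  qed
  have Kmul: "x ** y \<in> K" if "x \<in> K" "y \<in> K" for x y
  proof -
    have xy: "x \<in> D" "y \<in> D" "mpow x L = x" "mpow y L = y" using that by (auto simp: K_def)
    have "mpow (x ** y) L = mpow x L ** mpow y L" using Dcomm[OF xy(1,2)] by (rule mpow_prod)
    then show ?thesis using xy Dmul by (simp add: K_def)
  qed
  have Kmat: "mat c \<in> K" for c
    using Dmat by (simp add: K_def L_def mpow_mat field_pow_card_pow)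
  have K0: "0 \<in> K"
  proof -
    have "L = Suc (L - 1)" using L4 by simp
    then have "mpow (0 :: 'a^'b^'b) L = mpow 0 (Suc (L - 1))" by (rule arg_cong)
    then have "mpow 0 L = (0 :: 'a^'b^'b)" by simp
    then show ?thesis by (simp add: K_def D_def)
  qed
  have Kpow: "mpow x j \<in> K" if "x \<in> K" for x j
    using that by (induction j) (simp_all add: Kmat Kmul)
  have gmpow: "mpow (mpow g a) b = mpow g (a * b)" for a b by (simp add: mpow_mult)
  have Kstar: "K - {0} = (\<lambda>i. mpow g (c' * i)) ` {..<L - 1}"
  proof
    show "K - {0} \<subseteq> (\<lambda>i. mpow g (c' * i)) ` {..<L - 1}"
    proof
      fix x assume x: "x \<in> K - {0}"
      then have "x \<in> D - {0}" using KD by auto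
      then obtain i where i: "i < P" "x = mpow g i" using D_nonzero by auto
      have "mpow g (i * L) = mpow g i" using x i by (simp add: K_def gmpow)
      then have "(i * L) mod P = i mod P" using g_eq by blast
      moreover have "i * L = i + i * (L - 1)" using L4 by (cases L) auto
      ultimately have "P dvd i * (L - 1)" using mod_add_dvd by metis
      then have "c' * (L - 1) dvd i * (L - 1)" using Pc by simp
      then have "c' dvd i" using L4 by (subst (asm) dvd_times_right_cancel_iff) auto
      then obtain i' where i': "i = c' * i'" by blast
      have "i' < L - 1" using i(1) i' Pc c'pos by simp
      then show "x \<in> (\<lambda>i. mpow g (c' * i)) ` {..<L - 1}" using i i' by auto
    qed
  next
    show "(\<lambda>i. mpow g (c' * i)) ` {..<L - 1} \<subseteq> K - {0}"
    proof
      fix x assume "x \<in> (\<lambda>i. mpow g (c' * i)) ` {..<L - 1}"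
      then obtain i where i: "i < L - 1" "x = mpow g (c' * i)" by auto
      have "c' * i * L = c' * i + P * i" using L4 Pc by (cases L) (auto simp: algebra_simps)
      then have "(c' * i * L) mod P = (c' * i) mod P" by simp
      then have "mpow g (c' * i * L) = mpow g (c' * i)" using g_eq by blast
      then have "mpow x L = x" using i by (simp add: gmpow)
      moreover have "x \<in> D" using i Dpow[OF g(1)] by simp
      moreover have "x \<noteq> 0" using i g_ne0 by simp
      ultimately show "x \<in> K - {0}" by (simp add: K_def)
    qed
  qed
  have injK: "inj_on (\<lambda>i. mpow g (c' * i)) {..<L - 1}"
  proof (rule inj_onI)
    fix i j assume ij: "i \<in> {..<L - 1}" "j \<in> {..<L - 1}" "mpow g (c' * i) = mpow g (c' * j)"
    then have "(c' * i) mod P = (c' * j) mod P" using g_eq by blast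
    moreover have "c' * i < P" "c' * j < P" using ij(1,2) Pc c'pos by auto
    ultimately have "c' * i = c' * j" by simp
    then show "i = j" using c'pos by simp
  qed
  have cardK: "card K = L"
  proof -
    have "card (K - {0}) = L - 1" using Kstar card_image[OF injK] by simp
    moreover have "finite K" by simp
    moreover have "K = insert 0 (K - {0})" using K0 by blast
    ultimately have "card K = Suc (L - 1)"
      by (metis card_insert_disjoint finite_Diff Diff_iff singletonI)
    then show ?thesis using L4 by simp
  qed
  have Kinv: "\<exists>y\<in>K. x ** y = mat 1" if x: "x \<in> K" "x \<noteq> 0" for x
  proof -
    have xD: "x \<in> D" "mpow x L = x" using x by (auto simp: K_def)
    have L1: "L - 1 = Suc (L - 2)" "L = Suc (L - 1)" using L4 by auto
    have "mpow x L = mpow x (Suc (L - 1))" using L1(2) by (rule arg_cong)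
    then have "x ** mpow x (L - 1) = mpow x L" by simp
    then have z: "x ** (mpow x (L - 1) - mat 1) = 0" using xD by (simp add: matrix_diff_ldistrib)
    have "(mpow x (L - 1) - mat 1) *v v = 0" for v
    proof -
      have "x *v ((mpow x (L - 1) - mat 1) *v v) = 0"
        using z by (simp add: matrix_vector_mul_assoc)
      then show ?thesis using schur[OF xD(1) x(2)] by blast
    qed
    then have "mpow x (L - 1) - mat 1 = 0" by (simp add: matrix_eq)
    then have m1: "mpow x (L - 1) = mat 1" by simp
    have "mpow x (L - 1) = mpow x (Suc (L - 2))" using L1(1) by (rule arg_cong)
    then have "x ** mpow x (L - 2) = mat 1" using m1 by simp
    then show ?thesis using Kpow[OF x(1)] by blast
  qed
  have fK: "field_subring_of_card K l"
    unfolding field_subring_of_card_def is_subring_def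
  proof (intro conjI ballI bexI[of _ "mat 1"])
    show "0 \<in> K" by (rule K0)
    show "card K = ?q ^ l" using cardK by (simp add: L_def)
    show "mat 1 \<in> K" by (rule Kmat)
    show "(mat 1 :: 'a^'b^'b) \<noteq> 0" by (rule mat1_ne0)
  qed (auto simp: Kdiff Kmul Kinv Dcomm[OF subsetD[OF KD] subsetD[OF KD]])
  have TC: "T \<subseteq> centralizer K"
    using KD by (auto simp: centralizer_def D_def)
  have Csub: "is_subring (centralizer K)"
    unfolding is_subring_def
  proof (intro conjI ballI)
    show "0 \<in> centralizer K" by (simp add: centralizer_def)
    fix A B assume A: "A \<in> centralizer K" and B: "B \<in> centralizer K"
    show "A - B \<in> centralizer K"
      using A B by (simp add: centralizer_def matrix_diff_rdistrib matrix_diff_ldistrib)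
    have "(A ** B) ** u = u ** (A ** B)" if u: "u \<in> K" for u
    proof -
      have "(A ** B) ** u = A ** (B ** u)" by (simp add: matrix_mul_assoc)
      also have "\<dots> = A ** (u ** B)" using B u by (simp add: centralizer_def)
      also have "\<dots> = (A ** u) ** B" by (simp add: matrix_mul_assoc)
      also have "\<dots> = (u ** A) ** B" using A u by (simp add: centralizer_def)
      also have "\<dots> = u ** (A ** B)" by (simp add: matrix_mul_assoc)
      finally show ?thesis .
    qed
    then show "A ** B \<in> centralizer K" by (simp add: centralizer_def)
  qed
  have Cne: "centralizer K \<noteq> UNIV"
  proof -
    have "\<exists>x\<in>K. \<forall>c. x \<noteq> mat c"
    proof (rule ccontr)
      assume "\<not> (\<exists>x\<in>K. \<forall>c. x \<noteq> mat c)"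
      then have "K \<subseteq> range mat" by blast
      then have "card K \<le> card (range (mat :: 'a \<Rightarrow> 'a^'b^'b))" by (intro card_mono) auto
      also have "\<dots> = ?q" using card_image[OF inj_mat] by simp
      finally show False using cardK qL by simp
    qed
    then obtain x where x: "x \<in> K" "\<forall>c. x \<noteq> mat c" by blast
    then obtain A where "A ** x \<noteq> x ** A" using center_scalar by blast
    then have "A \<notin> centralizer K" using x by (auto simp: centralizer_def)
    then show ?thesis by blast
  qed
  have TeqC: "T = centralizer K"
    using Tmax Csub TC Cne unfolding maximal_subring_def by blast
  have ldvd: "l dvd CARD('b)"
  proof -
    have "CARD('b) = k + vec.dim W" using Wd k2 by simp
    then show ?thesis using lk by simp
  qed
  have "typeII T l"
    unfolding typeII_def using Tmax l(1) ldvd fK TeqC by blast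
  then show ?thesis using l(1) lk(1) by blast
qed

end


lemma exists_map:
  fixes u w :: "'a::field^'n"
  assumes "u \<noteq> 0" shows "\<exists>A. A *v u = w"
proof -
  obtain j0 where j0: "u $ j0 \<noteq> 0" using assms by (auto simp: vec_eq_iff)
  define A :: "'a^'n^'n" where "A = (\<chi> i j. if j = j0 then w $ i / u $ j0 else 0)"
  have "A *v u = w"
    using j0 by (simp add: A_def matrix_vector_mult_def vec_eq_iff if_distrib if_distribR
        sum.delta' cong: if_cong)
  then show ?thesis by blast
qed

context mctx begin

lemma stab_ne: "stab_ring U \<noteq> UNIV" "stab_ring W \<noteq> UNIV"
proof -
  obtain u where u: "u \<in> U" "u \<noteq> 0" using bU.exists_nonzero by blast
  obtain w where w: "w \<in> W" "w \<noteq> 0" using bW.exists_nonzero by blast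
  have wU: "w \<notin> U" using w UW0 by blast
  have uW: "u \<notin> W" using u UW0 by blast
  obtain A where A: "A *v u = w" using exists_map[OF u(2)] by blast
  obtain B where B: "B *v w = u" using exists_map[OF w(2)] by blast
  have "A \<notin> stab_ring U" using A u wU by (auto simp: stab_ring_def)
  then show "stab_ring U \<noteq> UNIV" by blast
  have "B \<notin> stab_ring W" using B w uW by (auto simp: stab_ring_def)
  then show "stab_ring W \<noteq> UNIV" by blast
qed

end

theorem lemma5p1:
  fixes t :: "'a::{field,finite}^'n^'n"
    and U W :: "('a^'n) set" and T :: "('a^'n^'n) set" and k :: nat
  assumes "1 \<le> k" and "2 * k < CARD('n)"
    and "vec.subspace U" and "vec.dim U = k"
    and "vec.subspace W" and "vec.dim W = CARD('n) - k"
    and "U \<inter> W = {0}" and "{u + w | u w. u \<in> U \<and> w \<in> W} = UNIV"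
    and "type_T t U W"
    and "maximal_subring T" and "t \<in> T"
  shows "T = stab_ring U \<or> T = stab_ring W \<or>
         (\<exists>l. prime l \<and> l dvd k \<and> l dvd CARD('n) \<and> typeII T l)"
proof -
  interpret mctx t U W T k using assms by unfold_locales
  show ?thesis
  proof (cases "T \<subseteq> stab_ring U")
    case True
    have "stab_ring U = T"
      using Tmax stab_subring[OF Us] True stab_ne(1) unfolding maximal_subring_def by blast
    then show ?thesis by simp
  next
    case nU: False
    show ?thesis
    proof (cases "T \<subseteq> stab_ring W")
      case True
      have "stab_ring W = T"
        using Tmax stab_subring[OF Ws] True stab_ne(2) unfolding maximal_subring_def by blast
      then show ?thesis by simp
    next
      case nW: False
      interpret mctx2 t U W T k using nU nW by unfold_locales
      obtain l where l: "prime l" "l dvd k" "typeII T l" using main_typeII by blast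
      then have "l dvd CARD('n)" by (simp add: typeII_def)
      then show ?thesis using l by blast
    qed
  qed
qed


end
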